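(* Let $m,n\geq2$, let $\mathbf p\in\mathbb R^m$, $\mathbf q\in\mathbb R^n$ be probability vectors with all entries strictly positive, and let $\alpha\geq0$, $\alpha\neq1$. Let $H$ denote either the Rényi entropy $H^R_\alpha(P)=\frac1{1-\alpha}\log\big(\sum_{i,j}p_{i,j}^\alpha\big)$ or the Tsallis entropy $H^T_\alpha(P)=\frac1{1-\alpha}\big(\sum_{i,j}p_{i,j}^\alpha-1\big)$. If $\tilde P\in\mathcal C(\mathbf p,\mathbf q)$ satisfies $H(\tilde P)=\inf_{P\in\mathcal C(\mathbf p,\mathbf q)}H(P)$, then $\tilde P\in\mathscr C(\mathbf p,\mathbf q)=\mathcal C_e(\mathbf p,\mathbf q)$ and $H(\tilde P)=\min_{P\in\mathscr C(\mathbf p,\mathbf q)}H(P)$.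
   Context: $\mathcal C(\mathbf p,\mathbf q)$ is the set of nonnegative $m\times n$ matrices with row sums $p_i$ and column sums $q_j$; $\mathcal C_e(\mathbf p,\mathbf q)$ its set of extreme points. $V(P)=\{(i,j):p_{i,j}\neq0\}$. $\mathscr C(\mathbf p,\mathbf q)$ is the set of $P\in\mathcal C(\mathbf p,\mathbf q)$ with $V(P)\subset T$ for some tree $T\subset[m]\times[n]$ with $|T|=m+n-1$. Graph notions: two distinct points of $[m]\times[n]$ are adjacent iff they share a row or a column; a circuit is a cyclic sequence $v_0,\dots,v_{s-1}$ ($s\geq4$) of pairwise distinct points $v_k=(i_k,j_k)$ with (indices mod $s$) $v_k,v_{k+1}$ adjacent and $(i_{k+2}-i_k)(j_{k+2}-j_k)\neq0$ for all $k$; a tree is a connected subset containing no circuit. *)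

theory Defs
  imports Main "HOL-Analysis.Analysis"
begin

text \<open>Matrices are functions nat => nat => real, indices 0-based: rows 0..<m, columns 0..<n.
  Entries outside the index box are required to be 0, so that matrices correspond
  exactly to elements of R^(m x n).\<close>

definition transport_polytope ::
  "nat \<Rightarrow> nat \<Rightarrow> (nat \<Rightarrow> real) \<Rightarrow> (nat \<Rightarrow> real) \<Rightarrow> (nat \<Rightarrow> nat \<Rightarrow> real) set" where
  "transport_polytope m n p q =
     {P. (\<forall>i j. (i \<ge> m \<or> j \<ge> n) \<longrightarrow> P i j = 0)
       \<and> (\<forall>i<m. \<forall>j<n. P i j \<ge> 0)
       \<and> (\<forall>i<m. (\<Sum>j<n. P i j) = p i)
       \<and> (\<forall>j<n. (\<Sum>i<m. P i j) = q j)}"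

definition extreme_points_of :: "(nat \<Rightarrow> nat \<Rightarrow> real) set \<Rightarrow> (nat \<Rightarrow> nat \<Rightarrow> real) set" where
  "extreme_points_of S =
     {x \<in> S. \<not> (\<exists>a\<in>S. \<exists>b\<in>S. a \<noteq> b \<and>
                 (\<exists>t::real. 0 < t \<and> t < 1 \<and> x = (\<lambda>i j. t * a i j + (1 - t) * b i j)))}"

definition support :: "nat \<Rightarrow> nat \<Rightarrow> (nat \<Rightarrow> nat \<Rightarrow> real) \<Rightarrow> (nat \<times> nat) set" where
  "support m n P = {(i, j). i < m \<and> j < n \<and> P i j \<noteq> 0}"

definition adjacent :: "nat \<times> nat \<Rightarrow> nat \<times> nat \<Rightarrow> bool" where
  "adjacent u v \<longleftrightarrow> u \<noteq> v \<and> (fst u = fst v \<or> snd u = snd v)"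

definition is_circuit :: "(nat \<times> nat) list \<Rightarrow> bool" where
  "is_circuit vs \<longleftrightarrow> length vs \<ge> 4 \<and> distinct vs \<and>
     (\<forall>k < length vs.
        adjacent (vs ! k) (vs ! ((k + 1) mod length vs)) \<and>
        fst (vs ! ((k + 2) mod length vs)) \<noteq> fst (vs ! k) \<and>
        snd (vs ! ((k + 2) mod length vs)) \<noteq> snd (vs ! k))"

definition connected_pts :: "(nat \<times> nat) set \<Rightarrow> bool" where
  "connected_pts T \<longleftrightarrow>
     (\<forall>u\<in>T. \<forall>v\<in>T. (u, v) \<in> {(x, y). x \<in> T \<and> y \<in> T \<and> adjacent x y}\<^sup>*)"

definition is_tree :: "(nat \<times> nat) set \<Rightarrow> bool" where
  "is_tree T \<longleftrightarrow> connected_pts T \<and> \<not> (\<exists>vs. set vs \<subseteq> T \<and> is_circuit vs)"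

definition tree_polytope ::
  "nat \<Rightarrow> nat \<Rightarrow> (nat \<Rightarrow> real) \<Rightarrow> (nat \<Rightarrow> real) \<Rightarrow> (nat \<Rightarrow> nat \<Rightarrow> real) set" where
  "tree_polytope m n p q =
     {P \<in> transport_polytope m n p q.
        \<exists>T. T \<subseteq> {0..<m} \<times> {0..<n} \<and> is_tree T \<and> card T = m + n - 1
            \<and> support m n P \<subseteq> T}"

text \<open>Renyi and Tsallis entropies (natural log; Isabelle's convention 0 powr a = 0,
  i.e. zero entries contribute nothing, also for alpha = 0).\<close>
definition renyi_entropy :: "real \<Rightarrow> nat \<Rightarrow> nat \<Rightarrow> (nat \<Rightarrow> nat \<Rightarrow> real) \<Rightarrow> real" where
  "renyi_entropy \<alpha> m n P = (1 / (1 - \<alpha>)) * ln (\<Sum>i<m. \<Sum>j<n. P i j powr \<alpha>)"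

definition tsallis_entropy :: "real \<Rightarrow> nat \<Rightarrow> nat \<Rightarrow> (nat \<Rightarrow> nat \<Rightarrow> real) \<Rightarrow> real" where
  "tsallis_entropy \<alpha> m n P = (1 / (1 - \<alpha>)) * ((\<Sum>i<m. \<Sum>j<n. P i j powr \<alpha>) - 1)"

end

theory Submission
  imports Defs
begin

lemma mvt_powr:
  fixes x y a :: real
  assumes "0 \<le> x" "x < y" "0 < a"
  shows "\<exists>z. x < z \<and> z < y \<and> y powr a - x powr a = (y - x) * (a * z powr (a - 1))"
proof -
  have c: "continuous_on {x..y} (\<lambda>z. z powr a)"
    by (rule continuous_on_powr') (use assms in auto)
  have d: "\<And>z. x < z \<Longrightarrow> z < y \<Longrightarrow> (\<lambda>z. z powr a) differentiable (at z)"
    using has_real_derivative_powr assms real_differentiable_def by (metis le_less_trans)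
  obtain l z where z: "x < z" "z < y" "DERIV (\<lambda>z. z powr a) z :> l" "y powr a - x powr a = (y - x) * l"
    using MVT[OF assms(2) c d] by blast
  have "l = a * z powr (a - 1)"
    using DERIV_unique[OF z(3) has_real_derivative_powr] z assms by auto
  thus ?thesis using z by blast
qed

lemma mid_powr:
  fixes x y a :: real
  assumes "0 \<le> x" "x < y" "0 < a" 
  shows "(a < 1 \<longrightarrow> (x powr a + y powr a)/2 < ((x+y)/2) powr a) \<and>
         (1 < a \<longrightarrow> ((x+y)/2) powr a < (x powr a + y powr a)/2)"
proof -
  define mm where "mm = (x+y)/2"
  have m1: "x < mm" "mm < y" using assms unfolding mm_def by auto
  obtain z1 where z1: "x < z1" "z1 < mm" "mm powr a - x powr a = (mm - x) * (a * z1 powr (a - 1))"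
    using mvt_powr[OF assms(1) m1(1) assms(3)] by blast
  obtain z2 where z2: "mm < z2" "z2 < y" "y powr a - mm powr a = (y - mm) * (a * z2 powr (a - 1))"
    using mvt_powr[of mm y a] m1 assms by auto
  have e: "mm - x = y - mm" "mm - x > 0" unfolding mm_def using assms by (auto simp: field_simps)
  have z1p: "z1 > 0" using z1 assms by auto
  have "z1 < z2" using z1 z2 by auto
  show ?thesis
  proof (intro conjI impI)
    assume "a < 1"
    hence "z2 powr (a - 1) < z1 powr (a - 1)" using powr_less_mono2_neg[of "a-1" z1 z2] z1p \<open>z1 < z2\<close> by auto
    hence "a * z2 powr (a - 1) < a * z1 powr (a - 1)" using assms by simp
    hence "(y - mm) * (a * z2 powr (a - 1)) < (mm - x) * (a * z1 powr (a - 1))"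
      unfolding e(1) using e(2) e(1) by (simp add: mult_strict_left_mono)
    thus "(x powr a + y powr a)/2 < ((x+y)/2) powr a" using z1(3) z2(3) unfolding mm_def[symmetric] by argo
  next
    assume "1 < a"
    hence "z1 powr (a - 1) < z2 powr (a - 1)" using powr_less_mono2[of "a-1" z1 z2] z1p \<open>z1 < z2\<close> by auto
    hence "a * z1 powr (a - 1) < a * z2 powr (a - 1)" using assms by simp
    hence "(mm - x) * (a * z1 powr (a - 1)) < (y - mm) * (a * z2 powr (a - 1))"
      unfolding e(1) using e(2) e(1) by (simp add: mult_strict_left_mono)
    thus "((x+y)/2) powr a < (x powr a + y powr a)/2" using z1(3) z2(3) unfolding mm_def[symmetric] by argo
  qed
qed

definition peel :: "(nat \<times> nat) set \<Rightarrow> bool" where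
  "peel X \<longleftrightarrow> (\<forall>Y \<subseteq> X. Y \<noteq> {} \<longrightarrow>
     (\<exists>c\<in>Y. (\<forall>c'\<in>Y. fst c' = fst c \<longrightarrow> c' = c) \<or> (\<forall>c'\<in>Y. snd c' = snd c \<longrightarrow> c' = c)))"

definition mateful :: "(nat \<times> nat) set \<Rightarrow> bool" where
  "mateful Y \<longleftrightarrow> (\<forall>c\<in>Y. (\<exists>c'\<in>Y. c' \<noteq> c \<and> fst c' = fst c) \<and> (\<exists>c'\<in>Y. c' \<noteq> c \<and> snd c' = snd c))"

lemma not_peel: "\<not> peel X \<longleftrightarrow> (\<exists>Y\<subseteq>X. Y \<noteq> {} \<and> mateful Y)"
proof -
  have e: "\<And>Y. mateful Y \<longleftrightarrow> (\<forall>c\<in>Y. \<not> (\<forall>c'\<in>Y. fst c' = fst c \<longrightarrow> c' = c) \<and> \<not> (\<forall>c'\<in>Y. snd c' = snd c \<longrightarrow> c' = c))"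
    unfolding mateful_def by blast
  have gen: "\<And>A B. (\<not> (\<forall>Y\<subseteq>X. Y \<noteq> {} \<longrightarrow> (\<exists>c\<in>Y. A c Y \<or> B c Y))) \<longleftrightarrow> (\<exists>Y\<subseteq>X. Y \<noteq> {} \<and> (\<forall>c\<in>Y. \<not> A c Y \<and> \<not> B c Y))"
    by blast
  show ?thesis unfolding peel_def e by (rule gen)
qed

definition cyc :: "(nat \<times> nat) set \<Rightarrow> nat \<Rightarrow> (nat \<Rightarrow> nat) \<Rightarrow> (nat \<Rightarrow> nat) \<Rightarrow> bool" where
  "cyc Y M rr kk \<longleftrightarrow> M \<ge> 2 \<and> inj_on rr {..<M} \<and> inj_on kk {..<M} \<and>
     (\<forall>t<M. (rr t, kk t) \<in> Y \<and> (rr t, kk ((t+1) mod M)) \<in> Y)"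

definition rpath :: "(nat \<times> nat) set \<Rightarrow> nat \<Rightarrow> (nat \<Rightarrow> nat) \<Rightarrow> (nat \<Rightarrow> nat) \<Rightarrow> bool" where
  "rpath Y L rr kk \<longleftrightarrow> inj_on rr {..<L} \<and> inj_on kk {..L} \<and>
     (\<forall>t<L. (rr t, kk t) \<in> Y \<and> (rr t, kk (Suc t)) \<in> Y) \<and> (L = 0 \<longrightarrow> (\<exists>r. (r, kk 0) \<in> Y))"

lemma path_bound:
  assumes "finite Y" "rpath Y L rr kk"
  shows "Suc L \<le> card (snd ` Y)"
proof -
  have sub: "kk ` {..L} \<subseteq> snd ` Y"
  proof
    fix k assume "k \<in> kk ` {..L}"
    then obtain t where t: "t \<le> L" "k = kk t" by auto
    show "k \<in> snd ` Y"
    proof (cases "t < L")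
      case True
      then have "(rr t, kk t) \<in> Y" using assms(2) unfolding rpath_def by blast
      then show ?thesis using t by force
    next
      case False
      then have tL: "t = L" using t by auto
      show ?thesis
      proof (cases "L = 0")
        case True
        then obtain r where "(r, kk 0) \<in> Y" using assms(2) unfolding rpath_def by blast
        then show ?thesis using t tL True by force
      next
        case False
        have all: "\<forall>t<L. (rr t, kk t) \<in> Y \<and> (rr t, kk (Suc t)) \<in> Y" using assms(2) unfolding rpath_def by blast
        have "L - 1 < L" using False by simp
        then have "(rr (L - 1), kk (Suc (L - 1))) \<in> Y" using all by blast
        then show ?thesis using t tL False by force
      qed
    qed
  qed
  have "card (kk ` {..L}) = Suc L"
    using assms(2) unfolding rpath_def by (simp add: card_image)
  then show ?thesis using card_mono[OF finite_imageI[OF assms(1)] sub] by simp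
qed

lemma mod_simps_M:
  fixes t M :: nat
  assumes "t < M"
  shows "(t + 1) mod M = (if t = M - 1 then 0 else t + 1)"
proof (cases "t = M - 1")
  case True
  then have "t + 1 = M" using assms by arith
  then show ?thesis using True by simp
next
  case False
  then have "t + 1 < M" using assms by simp
  then show ?thesis using False by simp
qed

lemma cycle_exists:
  assumes "finite Y" "Y \<noteq> {}" "mateful Y"
  shows "\<exists>M rr kk. cyc Y M rr kk"
proof -
  obtain c where c: "c \<in> Y" using assms(2) by blast
  have p0: "rpath Y 0 (\<lambda>_. 0) (\<lambda>_. snd c)"
    unfolding rpath_def using c by (cases c) auto
  define LL where "LL = {L. \<exists>rr kk. rpath Y L rr kk}"
  have finLL: "finite LL"
  proof (rule finite_subset)
    show "LL \<subseteq> {..card (snd ` Y)}" unfolding LL_def using path_bound[OF assms(1)] by fastforce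
  qed simp
  have "0 \<in> LL" unfolding LL_def using p0 by blast
  define Lm where "Lm = Max LL"
  have "Lm \<in> LL" unfolding Lm_def using finLL \<open>0 \<in> LL\<close> Max_in by blast
  then obtain rr kk where P: "rpath Y Lm rr kk" unfolding LL_def by blast
  have maxL: "\<And>rr' kk'. \<not> rpath Y (Suc Lm) rr' kk'"
  proof
    fix rr' kk' assume "rpath Y (Suc Lm) rr' kk'"
    then have "Suc Lm \<in> LL" unfolding LL_def by blast
    then have "Suc Lm \<le> Lm" unfolding Lm_def using finLL by simp
    then show False by simp
  qed
  have Pi: "inj_on rr {..<Lm}" "inj_on kk {..Lm}" "\<And>t. t < Lm \<Longrightarrow> (rr t, kk t) \<in> Y \<and> (rr t, kk (Suc t)) \<in> Y"
    using P unfolding rpath_def by auto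
  obtain r0 where r0: "(r0, kk Lm) \<in> Y" "0 < Lm \<Longrightarrow> r0 = rr (Lm - 1)"
  proof (cases "Lm = 0")
    case True
    then obtain r where "(r, kk 0) \<in> Y" using P unfolding rpath_def by blast
    then show ?thesis using that True by auto
  next
    case False
    then have "(rr (Lm - 1), kk (Suc (Lm - 1))) \<in> Y" using Pi(3)[of "Lm - 1"] by simp
    then show ?thesis using that False by simp
  qed
  have "\<exists>c'\<in>Y. c' \<noteq> (r0, kk Lm) \<and> snd c' = snd (r0, kk Lm)"
    using assms(3) r0(1) unfolding mateful_def by blast
  then obtain c' where c': "c' \<in> Y" "c' \<noteq> (r0, kk Lm)" "snd c' = kk Lm" by auto
  obtain r' where r': "(r', kk Lm) \<in> Y" "r' \<noteq> r0"
    using c' by (cases c') auto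
  show ?thesis
  proof (cases "r' \<in> rr ` {..<Lm}")
    case True
    then obtain s where s: "s < Lm" "rr s = r'" by auto
    have sL: "s \<noteq> Lm - 1" using s r' r0 by auto
    define M where "M = Lm - s"
    define rr' where "rr' = (\<lambda>t. if t = M - 1 then rr s else rr (s + 1 + t))"
    define kk' where "kk' = (\<lambda>t. kk (s + 1 + t))"
    have M2: "M \<ge> 2" unfolding M_def using s sL by auto
    have "cyc Y M rr' kk'"
      unfolding cyc_def
    proof (intro conjI allI impI)
      show "2 \<le> M" by (rule M2)
      show "inj_on rr' {..<M}"
      proof (rule inj_onI)
        fix a b assume ab: "a \<in> {..<M}" "b \<in> {..<M}" "rr' a = rr' b"
        show "a = b"
        proof -
          have A: "\<And>u v. u < Lm \<Longrightarrow> v < Lm \<Longrightarrow> rr u = rr v \<Longrightarrow> u = v"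
            using Pi(1) by (auto dest: inj_onD)
          show ?thesis
          proof (cases "a = M - 1"; cases "b = M - 1")
            assume "a = M - 1" "b = M - 1" then show ?thesis by simp
          next
            assume h: "a = M - 1" "b \<noteq> M - 1"
            then have "rr s = rr (s + 1 + b)" using ab(3) unfolding rr'_def by simp
            moreover have "b < M" using ab(2) by simp
            then have "s + 1 + b < Lm" using h s unfolding M_def by arith
            ultimately have "s = s + 1 + b" using A[of s "s + 1 + b"] s by auto
            then show ?thesis by simp
          next
            assume h: "a \<noteq> M - 1" "b = M - 1"
            then have "rr s = rr (s + 1 + a)" using ab(3) unfolding rr'_def by simp
            moreover have "a < M" using ab(1) by simp
            then have "s + 1 + a < Lm" using h s unfolding M_def by arith
            ultimately have "s = s + 1 + a" using A[of s "s + 1 + a"] s by auto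
            then show ?thesis by simp
          next
            assume h: "a \<noteq> M - 1" "b \<noteq> M - 1"
            then have "rr (s + 1 + a) = rr (s + 1 + b)" using ab(3) unfolding rr'_def by simp
            then show ?thesis using A[of "s + 1 + a" "s + 1 + b"] ab h unfolding M_def by auto
          qed
        qed
      qed
      show "inj_on kk' {..<M}"
      proof (rule inj_onI)
        fix a b assume ab: "a \<in> {..<M}" "b \<in> {..<M}" "kk' a = kk' b"
        have "s + 1 + a \<le> Lm" "s + 1 + b \<le> Lm" using ab unfolding M_def by auto
        then show "a = b" using inj_onD[OF Pi(2), of "s + 1 + a" "s + 1 + b"] ab(3) unfolding kk'_def by auto
      qed
      fix t assume t: "t < M"
      show "(rr' t, kk' t) \<in> Y"
      proof (cases "t = M - 1")
        case True
        then show ?thesis using r' s unfolding rr'_def kk'_def M_def by (simp add: Suc_diff_Suc)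
      next
        case False
        then show ?thesis using Pi(3)[of "s + 1 + t"] t unfolding rr'_def kk'_def M_def by auto
      qed
      show "(rr' t, kk' ((t + 1) mod M)) \<in> Y"
      proof (cases "t = M - 1")
        case True
        then show ?thesis using Pi(3)[of s] s t M2 unfolding rr'_def kk'_def by (simp add: mod_simps_M)
      next
        case False
        then show ?thesis using Pi(3)[of "s + 1 + t"] t unfolding rr'_def kk'_def M_def
          by (auto simp: mod_simps_M)
      qed
    qed
    then show ?thesis by blast
  next
    case False
    have "\<exists>c'\<in>Y. c' \<noteq> (r', kk Lm) \<and> fst c' = fst (r', kk Lm)"
      using assms(3) r'(1) unfolding mateful_def by blast
    then obtain c2 where c2: "c2 \<in> Y" "c2 \<noteq> (r', kk Lm)" "fst c2 = r'" by auto
    obtain k' where k': "(r', k') \<in> Y" "k' \<noteq> kk Lm"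
      using c2 by (cases c2) auto
    show ?thesis
    proof (cases "k' \<in> kk ` {..Lm}")
      case True
      then obtain s where s: "s \<le> Lm" "kk s = k'" by auto
      have sL: "s < Lm" using s k' by (cases "s = Lm") auto
      define M where "M = Lm - s + 1"
      define rr' where "rr' = (\<lambda>t. if t = M - 1 then r' else rr (s + t))"
      define kk' where "kk' = (\<lambda>t. kk (s + t))"
      have M2: "M \<ge> 2" unfolding M_def using sL by auto
      have "cyc Y M rr' kk'"
        unfolding cyc_def
      proof (intro conjI allI impI)
        show "2 \<le> M" by (rule M2)
        show "inj_on rr' {..<M}"
        proof (rule inj_onI)
          fix a b assume ab: "a \<in> {..<M}" "b \<in> {..<M}" "rr' a = rr' b"
          show "a = b"
          proof -
            have A: "\<And>u v. u < Lm \<Longrightarrow> v < Lm \<Longrightarrow> rr u = rr v \<Longrightarrow> u = v"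
              using Pi(1) by (auto dest: inj_onD)
            show ?thesis
            proof (cases "a = M - 1"; cases "b = M - 1")
              assume "a = M - 1" "b = M - 1" then show ?thesis by simp
            next
              assume h: "a = M - 1" "b \<noteq> M - 1"
              then have "r' = rr (s + b)" using ab(3) unfolding rr'_def by simp
              moreover have "s + b < Lm" using ab(2) h unfolding M_def by auto
              ultimately show ?thesis using False by auto
            next
              assume h: "a \<noteq> M - 1" "b = M - 1"
              then have "r' = rr (s + a)" using ab(3) unfolding rr'_def by simp
              moreover have "s + a < Lm" using ab(1) h unfolding M_def by auto
              ultimately show ?thesis using False by auto
            next
              assume h: "a \<noteq> M - 1" "b \<noteq> M - 1"
              then have "rr (s + a) = rr (s + b)" using ab(3) unfolding rr'_def by simp
              then show ?thesis using A[of "s + a" "s + b"] ab h unfolding M_def by auto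
            qed
          qed
        qed
        show "inj_on kk' {..<M}"
        proof (rule inj_onI)
          fix a b assume ab: "a \<in> {..<M}" "b \<in> {..<M}" "kk' a = kk' b"
          have "s + a \<le> Lm" "s + b \<le> Lm" using ab sL unfolding M_def by auto
          then show "a = b" using inj_onD[OF Pi(2), of "s + a" "s + b"] ab(3) unfolding kk'_def by auto
        qed
        fix t assume t: "t < M"
        show "(rr' t, kk' t) \<in> Y"
        proof (cases "t = M - 1")
          case True
          then show ?thesis using r' sL unfolding rr'_def kk'_def M_def by simp
        next
          case False
          then show ?thesis using Pi(3)[of "s + t"] t unfolding rr'_def kk'_def M_def by auto
        qed
        show "(rr' t, kk' ((t + 1) mod M)) \<in> Y"
        proof (cases "t = M - 1")
          case True
          then show ?thesis using k' s t M2 unfolding rr'_def kk'_def by (simp add: mod_simps_M)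
        next
          case False
          then show ?thesis using Pi(3)[of "s + t"] t unfolding rr'_def kk'_def M_def
            by (auto simp: mod_simps_M)
        qed
      qed
      then show ?thesis by blast
    next
      case False2: False
      have "rpath Y (Suc Lm) (rr(Lm := r')) (kk(Suc Lm := k'))"
        unfolding rpath_def
      proof (intro conjI allI impI)
        show "inj_on (rr(Lm := r')) {..<Suc Lm}"
          using Pi(1) False by (auto simp: inj_on_def lessThan_Suc)
        show "inj_on (kk(Suc Lm := k')) {..Suc Lm}"
          using Pi(2) False2 by (auto simp: inj_on_def atMost_Suc)
        fix t assume t: "t < Suc Lm"
        show "((rr(Lm := r')) t, (kk(Suc Lm := k')) t) \<in> Y"
          using t Pi(3)[of t] r' by (cases "t = Lm") auto
        show "((rr(Lm := r')) t, (kk(Suc Lm := k')) (Suc t)) \<in> Y"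
          using t Pi(3)[of t] k' by (cases "t = Lm") auto
      qed simp
      then show ?thesis using maxL by blast
    qed
  qed
qed

definition cf :: "nat \<Rightarrow> (nat \<Rightarrow> nat) \<Rightarrow> (nat \<Rightarrow> nat) \<Rightarrow> nat \<Rightarrow> nat \<times> nat" where
  "cf M rr kk i = (rr ((i div 2) mod M), kk (if even i then (i div 2) mod M else (i div 2 + 1) mod M))"

lemma mod2M: "((i::nat) mod (2 * M)) div 2 = (i div 2) mod M" "even (i mod (2 * M)) = even i"
proof -
  have e: "i mod (2 * M) = 2 * ((i div 2) mod M) + i mod 2" by (rule mod_mult2_eq)
  show "(i mod (2 * M)) div 2 = (i div 2) mod M" unfolding e by simp
  show "even (i mod (2 * M)) = even i" unfolding e by (simp add: even_iff_mod_2_eq_zero)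
qed

lemma cf_mod: "cf M rr kk (i mod (2 * M)) = cf M rr kk i"
  unfolding cf_def mod2M by (simp add: mod_Suc_eq)

lemma suc_mod_ne:
  fixes a M :: nat
  assumes "M \<ge> 2" "a < M"
  shows "(a + 1) mod M \<noteq> a" "(a + 1) mod M < M"
  using assms mod_simps_M[of a M] by auto

lemma cf_step:
  assumes C: "cyc Y M rr kk"
  shows "adjacent (cf M rr kk k) (cf M rr kk (k + 1))
     \<and> fst (cf M rr kk (k + 2)) \<noteq> fst (cf M rr kk k)
     \<and> snd (cf M rr kk (k + 2)) \<noteq> snd (cf M rr kk k)"
proof -
  have M2: "M \<ge> 2" and ir: "inj_on rr {..<M}" and ik: "inj_on kk {..<M}" using C unfolding cyc_def by auto
  define a where "a = (k div 2) mod M"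
  define a1 where "a1 = (a + 1) mod M"
  define a2 where "a2 = (a1 + 1) mod M"
  have aM: "a < M" unfolding a_def using M2 by simp
  have a1M: "a1 < M" "a1 \<noteq> a" unfolding a1_def using suc_mod_ne[OF M2 aM] by auto
  have a2M: "a2 < M" "a2 \<noteq> a1" unfolding a2_def using suc_mod_ne[OF M2 a1M(1)] by auto
  have s1: "(k div 2 + 1) mod M = a1" unfolding a1_def a_def by (simp add: mod_Suc_eq)
  have s2: "(k div 2 + 1 + 1) mod M = a2" unfolding a2_def s1[symmetric] by (simp add: mod_Suc_eq)
  have rne: "rr a1 \<noteq> rr a" "rr a2 \<noteq> rr a1" using ir a1M a2M aM by (auto dest: inj_onD)
  have kne: "kk a1 \<noteq> kk a" "kk a2 \<noteq> kk a1" using ik a1M a2M aM by (auto dest: inj_onD)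
  show ?thesis
  proof (cases "even k")
    case True
    have d1: "(k + 1) div 2 = k div 2" "odd (k + 1)" using True by auto
    have d2: "(k + 2) div 2 = k div 2 + 1" "even (k + 2)" using True by auto
    show ?thesis unfolding cf_def d1 d2 using True rne kne s1 a_def[symmetric]
      by (auto simp: adjacent_def)
  next
    case False
    have d1: "(k + 1) div 2 = k div 2 + 1" "even (k + 1)" using False by presburger+
    have d2: "(k + 2) div 2 = k div 2 + 1" "odd (k + 2)" using False by presburger+
    show ?thesis unfolding cf_def d1 d2 using False rne kne s1 s2 a_def[symmetric]
      by (auto simp: adjacent_def)
  qed
qed

lemma cf_in:
  assumes C: "cyc Y M rr kk"
  shows "cf M rr kk i \<in> Y"
proof -
  have M2: "M \<ge> 2" using C unfolding cyc_def by auto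
  define t where "t = (i div 2) mod M"
  have tM: "t < M" unfolding t_def using M2 by simp
  have s1: "(i div 2 + 1) mod M = (t + 1) mod M" unfolding t_def by (simp add: mod_Suc_eq)
  show ?thesis using C tM unfolding cf_def cyc_def s1 t_def[symmetric] by auto
qed

lemma cf_inj:
  assumes C: "cyc Y M rr kk"
  shows "inj_on (cf M rr kk) {..<2 * M}"
proof (rule inj_onI)
  have M2: "M \<ge> 2" and ir: "inj_on rr {..<M}" and ik: "inj_on kk {..<M}" using C unfolding cyc_def by auto
  fix i j assume ij: "i \<in> {..<2 * M}" "j \<in> {..<2 * M}" "cf M rr kk i = cf M rr kk j"
  have iM: "i div 2 < M" "j div 2 < M" using ij by auto
  have "rr (i div 2) = rr (j div 2)" using ij(3) iM unfolding cf_def by simp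
  then have dd: "i div 2 = j div 2" using ir iM by (auto dest: inj_onD)
  show "i = j"
  proof (cases "even i = even j")
    case True
    then show ?thesis using dd by (metis div_mult_mod_eq parity_cases)
  next
    case False
    define a where "a = i div 2"
    have aM: "a < M" using iM unfolding a_def by simp
    have ne: "(a + 1) mod M \<noteq> a" "(a + 1) mod M < M" using suc_mod_ne[OF M2 aM] by auto
    have "kk a = kk ((a + 1) mod M)"
      using ij(3) False dd iM unfolding cf_def a_def[symmetric] by (cases "even i") auto
    then have "a = (a + 1) mod M" using ik aM ne by (auto dest: inj_onD)
    then show ?thesis using ne by simp
  qed
qed

lemma cyc_circuit:
  assumes C: "cyc Y M rr kk"
  shows "\<exists>vs. set vs \<subseteq> Y \<and> is_circuit vs"
proof -
  have M2: "M \<ge> 2" using C unfolding cyc_def by auto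
  define vs where "vs = map (cf M rr kk) [0..<2 * M]"
  have len: "length vs = 2 * M" unfolding vs_def by simp
  have nth: "\<And>i. i < 2 * M \<Longrightarrow> vs ! i = cf M rr kk i" unfolding vs_def by simp
  have nthm: "\<And>i. vs ! (i mod (2 * M)) = cf M rr kk i"
    using nth cf_mod M2 by (metis mod_less_divisor mult_pos_pos zero_less_numeral less_le_trans zero_less_two)
  have "set vs \<subseteq> Y" unfolding vs_def using cf_in[OF C] by auto
  moreover have "is_circuit vs"
    unfolding is_circuit_def len
  proof (intro conjI allI impI)
    show "4 \<le> 2 * M" using M2 by simp
    show "distinct vs" unfolding vs_def using cf_inj[OF C] by (simp add: distinct_map atLeast0LessThan)
    fix k assume k: "k < 2 * M"
    have vk: "vs ! k = cf M rr kk k" using nth k by simp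
    show "adjacent (vs ! k) (vs ! ((k + 1) mod (2 * M)))"
      using cf_step[OF C, of k] unfolding vk nthm by simp
    show "fst (vs ! ((k + 2) mod (2 * M))) \<noteq> fst (vs ! k)"
      using cf_step[OF C, of k] unfolding vk nthm by simp
    show "snd (vs ! ((k + 2) mod (2 * M))) \<noteq> snd (vs ! k)"
      using cf_step[OF C, of k] unfolding vk nthm by simp
  qed
  ultimately show ?thesis by blast
qed

lemma circuit_mateful:
  assumes "is_circuit vs"
  shows "mateful (set vs)"
  unfolding mateful_def
proof
  fix c assume "c \<in> set vs"
  then obtain k where k: "k < length vs" "vs ! k = c" by (auto simp: in_set_conv_nth)
  define L where "L = length vs"
  have L4: "L \<ge> 4" using assms unfolding is_circuit_def L_def by simp
  define p where "p = (if k = 0 then L - 1 else k - 1)"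
  have pL: "p < L" unfolding p_def using k L4 L_def by auto
  have kL: "k < L" using k(1) unfolding L_def .
  have p1: "(p + 1) mod L = k"
  proof (cases "k = 0")
    case True
    then have "p + 1 = L" unfolding p_def using L4 by simp
    then show ?thesis using True by simp
  next
    case False
    then have "p + 1 = k" unfolding p_def by simp
    then show ?thesis using kL by simp
  qed
  have p2: "(p + 2) mod L = (k + 1) mod L"
  proof (cases "k = 0")
    case True
    then have "p + 2 = 1 + L" unfolding p_def using L4 by simp
    then have "(p + 2) mod L = 1 mod L" by (metis mod_add_self2)
    then show ?thesis using True by simp
  next
    case False
    then have "p + 2 = k + 1" unfolding p_def by simp
    then show ?thesis by simp
  qed
  have A: "\<forall>k<L. adjacent (vs ! k) (vs ! ((k + 1) mod L)) \<and>
        fst (vs ! ((k + 2) mod L)) \<noteq> fst (vs ! k) \<and> snd (vs ! ((k + 2) mod L)) \<noteq> snd (vs ! k)"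
    using assms unfolding is_circuit_def L_def by (elim conjE) assumption
  define nx where "nx = vs ! ((k + 1) mod L)"
  define pv where "pv = vs ! p"
  have L0: "0 < L" using L4 by simp
  have nxin: "nx \<in> set vs" unfolding nx_def using nth_mem[of "(k + 1) mod L" vs] mod_less_divisor[OF L0] L_def by simp
  have pvin: "pv \<in> set vs" unfolding pv_def using pL L_def by simp
  have a1: "adjacent c nx" using A[rule_format, OF kL] k(2) unfolding nx_def by simp
  have a2: "adjacent pv c" using A[rule_format, OF pL] p1 k(2) unfolding pv_def by simp
  have a3: "fst nx \<noteq> fst pv" "snd nx \<noteq> snd pv" using A[rule_format, OF pL] p2 unfolding nx_def pv_def by auto
  show "(\<exists>c'\<in>set vs. c' \<noteq> c \<and> fst c' = fst c) \<and> (\<exists>c'\<in>set vs. c' \<noteq> c \<and> snd c' = snd c)"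
  proof (cases "fst c = fst nx")
    case True
    then have "snd pv = snd c" using a2 a3 unfolding adjacent_def by auto
    moreover have "pv \<noteq> c" using a2 unfolding adjacent_def by auto
    moreover have "nx \<noteq> c" using a1 unfolding adjacent_def by auto
    ultimately show ?thesis using True nxin pvin by auto
  next
    case False
    then have "snd c = snd nx" using a1 unfolding adjacent_def by auto
    then have "fst pv = fst c" using a2 a3 unfolding adjacent_def by auto
    moreover have "pv \<noteq> c" using a2 unfolding adjacent_def by auto
    moreover have "nx \<noteq> c" using a1 unfolding adjacent_def by auto
    ultimately show ?thesis using \<open>snd c = snd nx\<close> nxin pvin by auto
  qed
qed

lemma peel_no_circuit:
  assumes "peel T" "set vs \<subseteq> T" "is_circuit vs"
  shows False
proof -
  have "vs \<noteq> []" using assms(3) unfolding is_circuit_def by auto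
  then have "set vs \<noteq> {}" by simp
  then have "\<not> peel T" using not_peel[THEN iffD2] assms(2) circuit_mateful[OF assms(3)] by blast
  then show False using assms(1) by simp
qed

lemma no_circuit_peel:
  assumes "finite T" "\<not> (\<exists>vs. set vs \<subseteq> T \<and> is_circuit vs)"
  shows "peel T"
proof (rule ccontr)
  assume "\<not> peel T"
  then have "\<exists>Y\<subseteq>T. Y \<noteq> {} \<and> mateful Y" using not_peel[THEN iffD1] by simp
  then obtain Y where Y: "Y \<subseteq> T" "Y \<noteq> {}" "mateful Y" by blast
  have "finite Y" using Y(1) assms(1) finite_subset by blast
  then obtain M rr kk where "cyc Y M rr kk" using cycle_exists Y by blast
  then obtain vs where "set vs \<subseteq> Y" "is_circuit vs" using cyc_circuit by blast
  then show False using assms(2) Y(1) by blast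
qed

lemma sum_ind:
  assumes "finite A"
  shows "(\<Sum>x\<in>A. if P x then (1::real) else 0) = real (card {x\<in>A. P x})"
  using sum.inter_filter[OF assms, of "\<lambda>_. (1::real)" P] by simp

lemma row_card:
  assumes "inj_on g {..<M}" "\<forall>t<M. g t < n"
  shows "card {j\<in>{..<n}. (i, j) \<in> (\<lambda>t. (rr t, g t)) ` {..<M}} = card {t\<in>{..<M}. rr t = i}"
proof -
  have "{j\<in>{..<n}. (i, j) \<in> (\<lambda>t. (rr t, g t)) ` {..<M}} = g ` {t\<in>{..<M}. rr t = i}"
    using assms(2) by auto
  moreover have "inj_on g {t\<in>{..<M}. rr t = i}" using assms(1) by (rule inj_on_subset) auto
  ultimately show ?thesis by (simp add: card_image)
qed

lemma col_card:
  assumes "inj_on h {..<M}" "\<forall>t<M. h t < m"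
  shows "card {i\<in>{..<m}. (i, j) \<in> (\<lambda>t. (h t, g t)) ` {..<M}} = card {t\<in>{..<M}. g t = j}"
proof -
  have "{i\<in>{..<m}. (i, j) \<in> (\<lambda>t. (h t, g t)) ` {..<M}} = h ` {t\<in>{..<M}. g t = j}"
    using assms(2) by auto
  moreover have "inj_on h {t\<in>{..<M}. g t = j}" using assms(1) by (rule inj_on_subset) auto
  ultimately show ?thesis by (simp add: card_image)
qed

lemma sigma_inj:
  fixes M :: nat
  assumes "M \<ge> 2"
  shows "inj_on (\<lambda>t. (t + 1) mod M) {..<M}" "(\<lambda>t. (t + 1) mod M) ` {..<M} = {..<M}"
proof -
  show i: "inj_on (\<lambda>t. (t + 1) mod M) {..<M}"
  proof (rule inj_onI)
    fix a b assume ab: "a \<in> {..<M}" "b \<in> {..<M}" "(a + 1) mod M = (b + 1) mod M"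
    then show "a = b" using mod_simps_M[of a M] mod_simps_M[of b M] assms
      by (auto split: if_splits)
  qed
  show "(\<lambda>t. (t + 1) mod M) ` {..<M} = {..<M}"
    by (rule endo_inj_surj[OF _ _ i]) (use assms in auto)
qed

definition ind :: "(nat \<times> nat) set \<Rightarrow> nat \<Rightarrow> nat \<Rightarrow> real" where
  "ind S i j = (if (i, j) \<in> S then 1 else 0)"

lemma cyc_d:
  assumes C: "cyc Y M rr kk" and Yb: "Y \<subseteq> {..<m} \<times> {..<n}"
  defines "Sp \<equiv> (\<lambda>t. (rr t, kk t)) ` {..<M}" and "Sm \<equiv> (\<lambda>t. (rr t, kk ((t + 1) mod M))) ` {..<M}"
  shows "(\<forall>i<m. (\<Sum>j<n. ind Sp i j) = (\<Sum>j<n. ind Sm i j))"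
    "(\<forall>j<n. (\<Sum>i<m. ind Sp i j) = (\<Sum>i<m. ind Sm i j))"
    "Sp \<inter> Sm = {}" "Sp \<subseteq> Y" "Sm \<subseteq> Y" "(rr 0, kk 0) \<in> Sp"
proof -
  have M2: "M \<ge> 2" and ir: "inj_on rr {..<M}" and ik: "inj_on kk {..<M}"
    and inY: "\<And>t. t < M \<Longrightarrow> (rr t, kk t) \<in> Y \<and> (rr t, kk ((t + 1) mod M)) \<in> Y"
    using C unfolding cyc_def by auto
  define sg where "sg = (\<lambda>t. (t + 1) mod M)"
  have sgi: "inj_on sg {..<M}" and sgs: "sg ` {..<M} = {..<M}" using sigma_inj[OF M2] unfolding sg_def by auto
  have iks: "inj_on (\<lambda>t. kk (sg t)) {..<M}"
    using comp_inj_on[OF sgi, of kk] sgs ik by (simp add: comp_def)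
  have bnd: "\<And>t. t < M \<Longrightarrow> rr t < m \<and> kk t < n \<and> kk (sg t) < n"
    using inY Yb unfolding sg_def by blast
  show "Sp \<subseteq> Y" "Sm \<subseteq> Y" unfolding Sp_def Sm_def using inY by auto
  show "(rr 0, kk 0) \<in> Sp" unfolding Sp_def using M2 by auto
  show "Sp \<inter> Sm = {}"
  proof (rule ccontr)
    assume "Sp \<inter> Sm \<noteq> {}"
    then obtain a b where ab: "a < M" "b < M" "rr a = rr b" "kk a = kk ((b + 1) mod M)"
      unfolding Sp_def Sm_def by auto
    have "a = b" using ab ir by (auto dest: inj_onD)
    moreover have "(b + 1) mod M < M" using M2 by simp
    ultimately have "a = (a + 1) mod M" using ab ik by (auto dest: inj_onD)
    then show False using suc_mod_ne[OF M2 ab(1)] by simp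
  qed
  show "\<forall>i<m. (\<Sum>j<n. ind Sp i j) = (\<Sum>j<n. ind Sm i j)"
  proof (intro allI impI)
    fix i assume "i < m"
    have "(\<Sum>j<n. ind Sp i j) = real (card {j\<in>{..<n}. (i, j) \<in> Sp})"
      unfolding ind_def by (rule sum_ind) simp
    also have "\<dots> = real (card {t\<in>{..<M}. rr t = i})"
      unfolding Sp_def using row_card[OF ik, where n=n and rr=rr and i=i] bnd by simp
    also have "\<dots> = real (card {j\<in>{..<n}. (i, j) \<in> Sm})"
      unfolding Sm_def using row_card[OF iks, where n=n and rr=rr and i=i] bnd unfolding sg_def by simp
    also have "\<dots> = (\<Sum>j<n. ind Sm i j)"
      unfolding ind_def by (rule sum_ind[symmetric]) simp
    finally show "(\<Sum>j<n. ind Sp i j) = (\<Sum>j<n. ind Sm i j)" .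
  qed
  show "\<forall>j<n. (\<Sum>i<m. ind Sp i j) = (\<Sum>i<m. ind Sm i j)"
  proof (intro allI impI)
    fix j assume "j < n"
    have e: "sg ` {t\<in>{..<M}. kk (sg t) = j} = {t\<in>{..<M}. kk t = j}"
      using sgs by auto
    have c: "card {t\<in>{..<M}. kk (sg t) = j} = card {t\<in>{..<M}. kk t = j}"
    proof -
      have "{t\<in>{..<M}. kk (sg t) = j} \<subseteq> {..<M}" by auto
      then have "card (sg ` {t\<in>{..<M}. kk (sg t) = j}) = card {t\<in>{..<M}. kk (sg t) = j}"
        using card_image[OF inj_on_subset[OF sgi]] by blast
      then show ?thesis using e by simp
    qed
    have "(\<Sum>i<m. ind Sp i j) = real (card {i\<in>{..<m}. (i, j) \<in> Sp})"
      unfolding ind_def by (rule sum_ind) simp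
    also have "\<dots> = real (card {t\<in>{..<M}. kk t = j})"
      unfolding Sp_def using col_card[OF ir, where m=m and g=kk and j=j] bnd by simp
    also have "\<dots> = real (card {t\<in>{..<M}. kk (sg t) = j})" using c by simp
    also have "\<dots> = real (card {i\<in>{..<m}. (i, j) \<in> Sm})"
      unfolding Sm_def using col_card[OF ir, where m=m and g="\<lambda>t. kk (sg t)" and j=j] bnd unfolding sg_def by simp
    also have "\<dots> = (\<Sum>i<m. ind Sm i j)"
      unfolding ind_def by (rule sum_ind[symmetric]) simp
    finally show "(\<Sum>i<m. ind Sp i j) = (\<Sum>i<m. ind Sm i j)" .
  qed
qed

lemma support_box: "support m n P \<subseteq> {..<m} \<times> {..<n}"
  unfolding support_def by auto

lemma poly_facts:
  assumes "P \<in> transport_polytope m n p q"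
  shows "\<And>i j. (m \<le> i \<or> n \<le> j) \<Longrightarrow> P i j = 0" "\<And>i j. i < m \<Longrightarrow> j < n \<Longrightarrow> 0 \<le> P i j"
    "\<And>i. i < m \<Longrightarrow> (\<Sum>j<n. P i j) = p i" "\<And>j. j < n \<Longrightarrow> (\<Sum>i<m. P i j) = q j"
  using assms unfolding transport_polytope_def by auto

lemma nonpeel_d:
  assumes P: "P \<in> transport_polytope m n p q" and np: "\<not> peel (support m n P)"
  shows "\<exists>d::nat \<Rightarrow> nat \<Rightarrow> real. (\<forall>i j. (m \<le> i \<or> n \<le> j) \<longrightarrow> d i j = 0) \<and> (\<forall>i<m. (\<Sum>j<n. d i j) = 0)
    \<and> (\<forall>j<n. (\<Sum>i<m. d i j) = 0)
    \<and> (\<forall>i j. d i j \<noteq> 0 \<longrightarrow> i < m \<and> j < n \<and> P i j > 0 \<and> (d i j = 1 \<or> d i j = -1))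
    \<and> (\<exists>i j. d i j = 1)"
proof -
  have "\<exists>Y\<subseteq>support m n P. Y \<noteq> {} \<and> mateful Y" using not_peel[THEN iffD1, OF np] .
  then obtain Y where Y: "Y \<subseteq> support m n P" "Y \<noteq> {}" "mateful Y" by blast
  have Yb: "Y \<subseteq> {..<m} \<times> {..<n}" using Y(1) support_box by blast
  have "finite Y" using Yb finite_subset by blast
  then obtain M rr kk where C: "cyc Y M rr kk" using cycle_exists Y by blast
  define Sp where "Sp = (\<lambda>t. (rr t, kk t)) ` {..<M}"
  define Sm where "Sm = (\<lambda>t. (rr t, kk ((t + 1) mod M))) ` {..<M}"
  note cd = cyc_d[OF C Yb, folded Sp_def Sm_def]
  define d where "d = (\<lambda>i j. ind Sp i j - ind Sm i j)"
  have SY: "Sp \<union> Sm \<subseteq> support m n P" using cd(4,5) Y(1) by blast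
  have out: "\<forall>i j. (m \<le> i \<or> n \<le> j) \<longrightarrow> d i j = 0"
  proof (intro allI impI)
    fix i j assume "m \<le> i \<or> n \<le> j"
    then have "(i, j) \<notin> Sp" "(i, j) \<notin> Sm" using SY support_box by fastforce+
    then show "d i j = 0" unfolding d_def ind_def by simp
  qed
  have rows: "\<forall>i<m. (\<Sum>j<n. d i j) = 0" using cd(1) unfolding d_def by (simp add: sum_subtractf)
  have cols: "\<forall>j<n. (\<Sum>i<m. d i j) = 0" using cd(2) unfolding d_def by (simp add: sum_subtractf)
  have nz: "\<forall>i j. d i j \<noteq> 0 \<longrightarrow> i < m \<and> j < n \<and> P i j > 0 \<and> (d i j = 1 \<or> d i j = -1)"
  proof (intro allI impI)
    fix i j assume h: "d i j \<noteq> 0"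
    then have "(i, j) \<in> Sp \<union> Sm" unfolding d_def ind_def by (auto split: if_splits)
    then have s: "(i, j) \<in> support m n P" using SY by blast
    then have "i < m" "j < n" "P i j \<noteq> 0" unfolding support_def by auto
    moreover have "P i j \<ge> 0" using poly_facts(2)[OF P \<open>i < m\<close> \<open>j < n\<close>] .
    moreover have "d i j = 1 \<or> d i j = -1" using cd(3) h unfolding d_def ind_def by (auto split: if_splits)
    ultimately show "i < m \<and> j < n \<and> P i j > 0 \<and> (d i j = 1 \<or> d i j = -1)" by auto
  qed
  have "d (rr 0) (kk 0) = 1" using cd(3,6) unfolding d_def ind_def by auto
  then show ?thesis using out rows cols nz by blast
qed

lemma perturb:
  assumes P: "P \<in> transport_polytope m n p q"
    and out: "\<forall>i j. (m \<le> i \<or> n \<le> j) \<longrightarrow> d i j = 0"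
    and rows: "\<forall>i<m. (\<Sum>j<n. d i j) = 0" and cols: "\<forall>j<n. (\<Sum>i<m. d i j) = 0"
    and nn: "\<forall>i<m. \<forall>j<n. 0 \<le> P i j + e * d i j"
  shows "(\<lambda>i j. P i j + e * d i j) \<in> transport_polytope m n p q"
  unfolding transport_polytope_def
proof (intro CollectI conjI allI impI)
  fix i j assume "m \<le> i \<or> n \<le> j"
  then have "d i j = 0" "P i j = 0" using out poly_facts(1)[OF P] by blast+
  then show "P i j + e * d i j = 0" by simp
next
  fix i j assume "i < m" "j < n"
  then show "0 \<le> P i j + e * d i j" using nn by simp
next
  fix i assume i: "i < m"
  have "(\<Sum>j<n. P i j + e * d i j) = (\<Sum>j<n. P i j) + e * (\<Sum>j<n. d i j)"
    by (simp add: sum.distrib sum_distrib_left)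
  then show "(\<Sum>j<n. P i j + e * d i j) = p i" using i rows poly_facts(3)[OF P i] by simp
next
  fix j assume j: "j < n"
  have "(\<Sum>i<m. P i j + e * d i j) = (\<Sum>i<m. P i j) + e * (\<Sum>i<m. d i j)"
    by (simp add: sum.distrib sum_distrib_left)
  then show "(\<Sum>i<m. P i j + e * d i j) = q j" using j cols poly_facts(4)[OF P j] by simp
qed

lemma sum_single_nz:
  fixes f :: "nat \<Rightarrow> real"
  assumes "j0 < n" "\<forall>j<n. j \<noteq> j0 \<longrightarrow> f j = 0"
  shows "(\<Sum>j<n. f j) = f j0"
proof -
  have "(\<Sum>j<n. f j) = (\<Sum>j<n. if j = j0 then f j else 0)"
    using assms(2) by (intro sum.cong) auto
  also have "\<dots> = f j0" using assms(1) by (simp add: sum.delta)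
  finally show ?thesis .
qed

lemma peel_extreme:
  assumes P: "P \<in> transport_polytope m n p q" and pl: "peel (support m n P)"
  shows "P \<in> extreme_points_of (transport_polytope m n p q)"
  unfolding extreme_points_of_def
proof (intro CollectI conjI notI)
  show "P \<in> transport_polytope m n p q" by (rule P)
  assume "\<exists>a\<in>transport_polytope m n p q. \<exists>b\<in>transport_polytope m n p q. a \<noteq> b \<and>
                 (\<exists>t::real. 0 < t \<and> t < 1 \<and> P = (\<lambda>i j. t * a i j + (1 - t) * b i j))"
  then obtain a b t where a: "a \<in> transport_polytope m n p q" and b: "b \<in> transport_polytope m n p q"
    and ab: "a \<noteq> b" and t: "0 < t" "t < 1" and Pe: "P = (\<lambda>i j. t * a i j + (1 - t) * b i j)" by blast
  define X where "X = {(i, j). i < m \<and> j < n \<and> a i j \<noteq> b i j}"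
  have XS: "X \<subseteq> support m n P"
  proof
    fix c assume "c \<in> X"
    then obtain i j where c: "c = (i, j)" "i < m" "j < n" "a i j \<noteq> b i j" unfolding X_def by auto
    have "a i j \<ge> 0" "b i j \<ge> 0" using poly_facts(2)[OF a c(2,3)] poly_facts(2)[OF b c(2,3)] by auto
    have "P i j \<noteq> 0"
    proof
      assume "P i j = 0"
      then have "t * a i j + (1 - t) * b i j = 0" using Pe by simp
      moreover have "t * a i j \<ge> 0" "(1 - t) * b i j \<ge> 0" using \<open>a i j \<ge> 0\<close> \<open>b i j \<ge> 0\<close> t by auto
      ultimately have "t * a i j = 0" "(1 - t) * b i j = 0" by linarith+
      then have "a i j = 0" "b i j = 0" using t by auto
      then show False using c(4) by simp
    qed
    then show "c \<in> support m n P" unfolding support_def using c by auto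
  qed
  have "X \<noteq> {}"
  proof -
    have "\<exists>i j. a i j \<noteq> b i j"
    proof (rule ccontr)
      assume "\<not> (\<exists>i j. a i j \<noteq> b i j)"
      then have "a = b" by (intro ext) blast
      then show False using ab by simp
    qed
    then obtain i j where ij: "a i j \<noteq> b i j" by blast
    have "i < m \<and> j < n"
    proof (rule ccontr)
      assume "\<not> (i < m \<and> j < n)"
      then have "m \<le> i \<or> n \<le> j" by auto
      then have "a i j = 0" "b i j = 0" using poly_facts(1)[OF a] poly_facts(1)[OF b] by auto
      then show False using ij by simp
    qed
    then show ?thesis unfolding X_def using ij by auto
  qed
  then obtain c where c: "c \<in> X" and cc: "(\<forall>c'\<in>X. fst c' = fst c \<longrightarrow> c' = c) \<or> (\<forall>c'\<in>X. snd c' = snd c \<longrightarrow> c' = c)"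
    using pl[unfolded peel_def, rule_format, OF XS \<open>X \<noteq> {}\<close>] by blast
  obtain i0 j0 where c0: "c = (i0, j0)" "i0 < m" "j0 < n" "a i0 j0 \<noteq> b i0 j0" using c unfolding X_def by auto
  from cc show False
  proof
    assume h: "\<forall>c'\<in>X. fst c' = fst c \<longrightarrow> c' = c"
    have "\<forall>j<n. j \<noteq> j0 \<longrightarrow> a i0 j - b i0 j = 0"
    proof (intro allI impI)
      fix j assume "j < n" "j \<noteq> j0"
      then have "(i0, j) \<notin> X" using h c0 by auto
      then show "a i0 j - b i0 j = 0" unfolding X_def using \<open>j < n\<close> c0 by auto
    qed
    then have "(\<Sum>j<n. a i0 j - b i0 j) = a i0 j0 - b i0 j0" using sum_single_nz[OF c0(3), of "\<lambda>j. a i0 j - b i0 j"] by simp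
    moreover have "(\<Sum>j<n. a i0 j - b i0 j) = 0"
      using poly_facts(3)[OF a c0(2)] poly_facts(3)[OF b c0(2)] by (simp add: sum_subtractf)
    ultimately show False using c0 by simp
  next
    assume h: "\<forall>c'\<in>X. snd c' = snd c \<longrightarrow> c' = c"
    have "\<forall>i<m. i \<noteq> i0 \<longrightarrow> a i j0 - b i j0 = 0"
    proof (intro allI impI)
      fix i assume "i < m" "i \<noteq> i0"
      then have "(i, j0) \<notin> X" using h c0 by auto
      then show "a i j0 - b i j0 = 0" unfolding X_def using \<open>i < m\<close> c0 by auto
    qed
    then have "(\<Sum>i<m. a i j0 - b i j0) = a i0 j0 - b i0 j0" using sum_single_nz[OF c0(2), of "\<lambda>i. a i j0 - b i j0"] by simp
    moreover have "(\<Sum>i<m. a i j0 - b i j0) = 0"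
      using poly_facts(4)[OF a c0(3)] poly_facts(4)[OF b c0(3)] by (simp add: sum_subtractf)
    ultimately show False using c0 by simp
  qed
qed

lemma min_pos:
  fixes f :: "'a \<Rightarrow> real"
  assumes "finite S" "\<forall>x\<in>S. f x > 0"
  shows "\<exists>e>0. \<forall>x\<in>S. e \<le> f x"
proof (cases "S = {}")
  case True then show ?thesis by (intro exI[of _ 1]) auto
next
  case False
  show ?thesis
    by (rule exI[of _ "Min (f ` S)"]) (use assms False in auto)
qed

lemma extreme_peel:
  assumes P: "P \<in> extreme_points_of (transport_polytope m n p q)"
  shows "peel (support m n P)"
proof (rule ccontr)
  assume np: "\<not> peel (support m n P)"
  have Pp: "P \<in> transport_polytope m n p q" using P unfolding extreme_points_of_def by auto
  obtain d :: "nat \<Rightarrow> nat \<Rightarrow> real" where out: "\<forall>i j. (m \<le> i \<or> n \<le> j) \<longrightarrow> d i j = 0" and rows: "\<forall>i<m. (\<Sum>j<n. d i j) = 0"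
    and cols: "\<forall>j<n. (\<Sum>i<m. d i j) = 0"
    and nz: "\<forall>i j. d i j \<noteq> 0 \<longrightarrow> i < m \<and> j < n \<and> P i j > 0 \<and> (d i j = 1 \<or> d i j = -1)"
    and one: "\<exists>i j. d i j = 1"
    using nonpeel_d[OF Pp np] by blast
  define S where "S = {c \<in> {..<m} \<times> {..<n}. d (fst c) (snd c) \<noteq> 0}"
  have "finite S" unfolding S_def by simp
  moreover have "\<forall>c\<in>S. P (fst c) (snd c) > 0" unfolding S_def using nz by auto
  ultimately obtain e where e: "e > 0" "\<forall>c\<in>S. e \<le> P (fst c) (snd c)"
    using min_pos[of S "\<lambda>c. P (fst c) (snd c)"] by blast
  have bnd: "e \<le> P i j" if "i < m" "j < n" "d i j \<noteq> 0" for i j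
  proof -
    have "(i, j) \<in> S" unfolding S_def using that by simp
    then show ?thesis using e(2) by fastforce
  qed
  have nn: "\<forall>i<m. \<forall>j<n. 0 \<le> P i j + s * d i j" if s: "\<bar>s\<bar> \<le> e" for s
  proof (intro allI impI)
    fix i j assume ij: "i < m" "j < n"
    show "0 \<le> P i j + s * d i j"
    proof (cases "d i j = 0")
      case True then show ?thesis using poly_facts(2)[OF Pp ij] by simp
    next
      case False
      then have "e \<le> P i j" "d i j = 1 \<or> d i j = -1" using bnd ij nz by auto
      then show ?thesis using s by (auto simp: abs_if split: if_splits)
    qed
  qed
  define A where "A = (\<lambda>i j. P i j + e * d i j)"
  define B where "B = (\<lambda>i j. P i j + (- e) * d i j)"
  have A: "A \<in> transport_polytope m n p q" unfolding A_def
    by (rule perturb[OF Pp out rows cols nn]) (use e in simp)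
  have B: "B \<in> transport_polytope m n p q" unfolding B_def
    by (rule perturb[OF Pp out rows cols nn]) (use e in simp)
  obtain i j where "d i j = 1" using one by blast
  then have "A i j \<noteq> B i j" unfolding A_def B_def using e by simp
  then have "A \<noteq> B" by auto
  moreover have "P = (\<lambda>i j. (1/2) * A i j + (1 - 1/2) * B i j)" unfolding A_def B_def by (auto simp: algebra_simps)
  then have ex: "\<exists>t::real. 0 < t \<and> t < 1 \<and> P = (\<lambda>i j. t * A i j + (1 - t) * B i j)"
    by (intro exI[of _ "1/2"]) simp
  have H: "\<not> (\<exists>a\<in>transport_polytope m n p q. \<exists>b\<in>transport_polytope m n p q. a \<noteq> b \<and>
                 (\<exists>t::real. 0 < t \<and> t < 1 \<and> P = (\<lambda>i j. t * a i j + (1 - t) * b i j)))"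
    using P unfolding extreme_points_of_def by simp
  show False using H A B \<open>A \<noteq> B\<close> ex by blast
qed

lemma peel_subset: "peel S \<Longrightarrow> S' \<subseteq> S \<Longrightarrow> peel S'"
  unfolding peel_def by (meson order_trans)

lemma peel_insert_row:
  assumes "peel T" "\<forall>c\<in>T. fst c \<noteq> i"
  shows "peel (insert (i, j) T)"
  unfolding peel_def
proof (intro allI impI)
  fix Y assume Y: "Y \<subseteq> insert (i, j) T" "Y \<noteq> {}"
  show "\<exists>c\<in>Y. (\<forall>c'\<in>Y. fst c' = fst c \<longrightarrow> c' = c) \<or> (\<forall>c'\<in>Y. snd c' = snd c \<longrightarrow> c' = c)"
  proof (cases "(i, j) \<in> Y")
    case True
    have "\<forall>c'\<in>Y. fst c' = fst (i, j) \<longrightarrow> c' = (i, j)" using Y(1) assms(2) by auto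
    then show ?thesis using True by blast
  next
    case False
    then have "Y \<subseteq> T" using Y(1) by auto
    then show ?thesis using assms(1) Y(2) unfolding peel_def by blast
  qed
qed

lemma peel_insert_col:
  assumes "peel T" "\<forall>c\<in>T. snd c \<noteq> j"
  shows "peel (insert (i, j) T)"
  unfolding peel_def
proof (intro allI impI)
  fix Y assume Y: "Y \<subseteq> insert (i, j) T" "Y \<noteq> {}"
  show "\<exists>c\<in>Y. (\<forall>c'\<in>Y. fst c' = fst c \<longrightarrow> c' = c) \<or> (\<forall>c'\<in>Y. snd c' = snd c \<longrightarrow> c' = c)"
  proof (cases "(i, j) \<in> Y")
    case True
    have "\<forall>c'\<in>Y. snd c' = snd (i, j) \<longrightarrow> c' = (i, j)" using Y(1) assms(2) by auto
    then show ?thesis using True by blast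
  next
    case False
    then have "Y \<subseteq> T" using Y(1) by auto
    then show ?thesis using assms(1) Y(2) unfolding peel_def by blast
  qed
qed

lemma peel_one_row:
  assumes "\<forall>c\<in>T. fst c = i"
  shows "peel T"
  unfolding peel_def
proof (intro allI impI)
  fix Y assume Y: "Y \<subseteq> T" "Y \<noteq> {}"
  then obtain c where c: "c \<in> Y" by blast
  have "\<forall>c'\<in>Y. snd c' = snd c \<longrightarrow> c' = c"
  proof (intro ballI impI)
    fix c' assume h: "c' \<in> Y" "snd c' = snd c"
    have "fst c' = fst c" using h(1) c Y(1) assms by (metis subsetD)
    then show "c' = c" using h(2) by (simp add: prod_eq_iff)
  qed
  then show "\<exists>c\<in>Y. (\<forall>c'\<in>Y. fst c' = fst c \<longrightarrow> c' = c) \<or> (\<forall>c'\<in>Y. snd c' = snd c \<longrightarrow> c' = c)"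
    using c by blast
qed

lemma peel_one_col:
  assumes "\<forall>c\<in>T. snd c = j"
  shows "peel T"
  unfolding peel_def
proof (intro allI impI)
  fix Y assume Y: "Y \<subseteq> T" "Y \<noteq> {}"
  then obtain c where c: "c \<in> Y" by blast
  have "\<forall>c'\<in>Y. fst c' = fst c \<longrightarrow> c' = c"
  proof (intro ballI impI)
    fix c' assume h: "c' \<in> Y" "fst c' = fst c"
    have "snd c' = snd c" using h(1) c Y(1) assms by (metis subsetD)
    then show "c' = c" using h(2) by (simp add: prod_eq_iff)
  qed
  then show "\<exists>c\<in>Y. (\<forall>c'\<in>Y. fst c' = fst c \<longrightarrow> c' = c) \<or> (\<forall>c'\<in>Y. snd c' = snd c \<longrightarrow> c' = c)"
    using c by blast
qed

definition EE :: "(nat \<times> nat) set \<Rightarrow> ((nat \<times> nat) \<times> (nat \<times> nat)) set" where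
  "EE T = {(x, y). x \<in> T \<and> y \<in> T \<and> adjacent x y}"

lemma conn_EE: "connected_pts T \<longleftrightarrow> (\<forall>u\<in>T. \<forall>v\<in>T. (u, v) \<in> (EE T)\<^sup>*)"
  unfolding connected_pts_def EE_def by simp

lemma adjacent_sym: "adjacent x y \<Longrightarrow> adjacent y x"
  unfolding adjacent_def by auto

lemma conn_insert:
  assumes "connected_pts T" "x \<in> T" "adjacent c x"
  shows "connected_pts (insert c T)"
  unfolding conn_EE
proof (intro ballI)
  fix u v assume uv: "u \<in> insert c T" "v \<in> insert c T"
  have mono: "(EE T)\<^sup>* \<subseteq> (EE (insert c T))\<^sup>*" by (rule rtrancl_mono) (auto simp: EE_def)
  have T: "\<And>u v. u \<in> T \<Longrightarrow> v \<in> T \<Longrightarrow> (u, v) \<in> (EE (insert c T))\<^sup>*"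
    using assms(1) mono unfolding conn_EE by blast
  have cx: "(c, x) \<in> EE (insert c T)" "(x, c) \<in> EE (insert c T)"
    using assms(2,3) adjacent_sym unfolding EE_def by auto
  show "(u, v) \<in> (EE (insert c T))\<^sup>*"
  proof (cases "u = c")
    case True
    show ?thesis
    proof (cases "v = c")
      case True2: True
      then show ?thesis using True by simp
    next
      case False
      then have "v \<in> T" using uv by auto
      then show ?thesis using True converse_rtrancl_into_rtrancl[OF cx(1) T[OF assms(2)]] by simp
    qed
  next
    case False
    then have u: "u \<in> T" using uv by auto
    show ?thesis
    proof (cases "v = c")
      case True
      then show ?thesis using rtrancl_into_rtrancl[OF T[OF u assms(2)] cx(2)] by simp
    next
      case False
      then have "v \<in> T" using uv by auto
      then show ?thesis using T u by simp
    qed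
  qed
qed

lemma conn_one_row:
  assumes "\<forall>c\<in>T. fst c = i"
  shows "connected_pts T"
  unfolding conn_EE
proof (intro ballI)
  fix u v assume uv: "u \<in> T" "v \<in> T"
  show "(u, v) \<in> (EE T)\<^sup>*"
  proof (cases "u = v")
    case True then show ?thesis by simp
  next
    case False
    then have "(u, v) \<in> EE T" using uv assms unfolding EE_def adjacent_def by auto
    then show ?thesis by simp
  qed
qed

lemma conn_one_col:
  assumes "\<forall>c\<in>T. snd c = j"
  shows "connected_pts T"
  unfolding conn_EE
proof (intro ballI)
  fix u v assume uv: "u \<in> T" "v \<in> T"
  show "(u, v) \<in> (EE T)\<^sup>*"
  proof (cases "u = v")
    case True then show ?thesis by simp
  next
    case False
    then have "(u, v) \<in> EE T" using uv assms unfolding EE_def adjacent_def by auto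
    then show ?thesis by simp
  qed
qed

definition good :: "nat set \<Rightarrow> nat set \<Rightarrow> (nat \<times> nat) set \<Rightarrow> (nat \<times> nat) set \<Rightarrow> bool" where
  "good R C S T \<longleftrightarrow> S \<subseteq> T \<and> T \<subseteq> R \<times> C \<and> peel T \<and> connected_pts T \<and> card T + 1 = card R + card C
     \<and> (\<forall>i\<in>R. \<exists>j. (i, j) \<in> T) \<and> (\<forall>j\<in>C. \<exists>i. (i, j) \<in> T)"

lemma extend:
  "finite R \<Longrightarrow> finite C \<Longrightarrow> R \<noteq> {} \<Longrightarrow> C \<noteq> {} \<Longrightarrow> S \<subseteq> R \<times> C \<Longrightarrow> peel S \<Longrightarrow> \<exists>T. good R C S T"
proof (induction "card R + card C" arbitrary: R C S rule: less_induct)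
  case less
  note fR = less.prems(1) and fC = less.prems(2) and neR = less.prems(3) and neC = less.prems(4)
    and SRC = less.prems(5) and pS = less.prems(6)
  have cR: "card R \<ge> 1" using fR neR by (simp add: Suc_le_eq card_gt_0_iff)
  have cC: "card C \<ge> 1" using fC neC by (simp add: Suc_le_eq card_gt_0_iff)
  show ?case
  proof (cases "card R = 1")
    case True
    then obtain i where Ri: "R = {i}" using card_1_singletonE by blast
    define T where "T = {i} \<times> C"
    have "good R C S T" unfolding good_def
    proof (intro conjI)
      show "S \<subseteq> T" using SRC Ri T_def by simp
      show "T \<subseteq> R \<times> C" using Ri T_def by simp
      show "peel T" by (rule peel_one_row[of _ i]) (auto simp: T_def)
      show "connected_pts T" by (rule conn_one_row[of _ i]) (auto simp: T_def)
      show "card T + 1 = card R + card C" using Ri unfolding T_def by (simp add: card_cartesian_product)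
      show "\<forall>i'\<in>R. \<exists>j. (i', j) \<in> T" using Ri neC unfolding T_def by auto
      show "\<forall>j\<in>C. \<exists>i'. (i', j) \<in> T" using Ri unfolding T_def by auto
    qed
    then show ?thesis by blast
  next
    case R2: False
    show ?thesis
    proof (cases "card C = 1")
      case True
      then obtain j where Cj: "C = {j}" using card_1_singletonE by blast
      define T where "T = R \<times> {j}"
      have "good R C S T" unfolding good_def
      proof (intro conjI)
        show "S \<subseteq> T" using SRC Cj T_def by simp
        show "T \<subseteq> R \<times> C" using Cj T_def by simp
        show "peel T" by (rule peel_one_col[of _ j]) (auto simp: T_def)
        show "connected_pts T" by (rule conn_one_col[of _ j]) (auto simp: T_def)
        show "card T + 1 = card R + card C" using Cj unfolding T_def by (simp add: card_cartesian_product)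
        show "\<forall>i'\<in>R. \<exists>j'. (i', j') \<in> T" using Cj unfolding T_def by auto
        show "\<forall>j'\<in>C. \<exists>i'. (i', j') \<in> T" using Cj neR unfolding T_def by auto
      qed
      then show ?thesis by blast
    next
      case C2: False
      show ?thesis
      proof (cases "\<exists>i\<in>R. \<forall>c\<in>S. \<forall>c'\<in>S. fst c = i \<longrightarrow> fst c' = i \<longrightarrow> c = c'")
        case True
        then obtain i where i: "i \<in> R" and uniq: "\<forall>c\<in>S. \<forall>c'\<in>S. fst c = i \<longrightarrow> fst c' = i \<longrightarrow> c = c'" by blast
        define R' where "R' = R - {i}"
        define S' where "S' = {c\<in>S. fst c \<noteq> i}"
        have cR': "card R' = card R - 1" unfolding R'_def using i fR by simp
        have lt: "card R' + card C < card R + card C" using cR' cR by simp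
        have neR': "R' \<noteq> {}" using cR' R2 cR by (metis card.empty diff_is_0_eq le_antisym)
        have fR': "finite R'" unfolding R'_def using fR by simp
        have S'RC: "S' \<subseteq> R' \<times> C" unfolding S'_def R'_def using SRC by auto
        have pS': "peel S'" using peel_subset[OF pS] unfolding S'_def by auto
        obtain T' where gT': "good R' C S' T'" using less.hyps[OF lt fR' fC neR' neC S'RC pS'] by blast
        have T'1: "S' \<subseteq> T'" "T' \<subseteq> R' \<times> C" "peel T'" "connected_pts T'" "card T' + 1 = card R' + card C"
          "\<forall>i\<in>R'. \<exists>j. (i, j) \<in> T'" "\<forall>j\<in>C. \<exists>i. (i, j) \<in> T'"
          using gT' unfolding good_def by auto
        obtain j where j: "j \<in> C" "\<forall>c\<in>S. fst c = i \<longrightarrow> c = (i, j)"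
        proof (cases "\<exists>c\<in>S. fst c = i")
          case True
          then obtain c where c: "c \<in> S" "fst c = i" by blast
          have "snd c \<in> C" using c SRC by auto
          moreover have "\<forall>c'\<in>S. fst c' = i \<longrightarrow> c' = (i, snd c)" using uniq c by (metis prod.collapse)
          ultimately show ?thesis using that by blast
        next
          case False
          obtain j where "j \<in> C" using neC by blast
          then show ?thesis using that False by blast
        qed
        define T where "T = insert (i, j) T'"
        have noti: "\<forall>c\<in>T'. fst c \<noteq> i" using T'1(2) unfolding R'_def by auto
        have fT': "finite T'" using T'1(2) fR' fC finite_subset by blast
        have "good R C S T" unfolding good_def
        proof (intro conjI)
          show "S \<subseteq> T"
          proof
            fix c assume "c \<in> S"
            then show "c \<in> T" using j(2) T'1(1) unfolding T_def S'_def by auto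
          qed
          show "T \<subseteq> R \<times> C" using T'1(2) i j(1) unfolding T_def R'_def by auto
          show "peel T" unfolding T_def by (rule peel_insert_row[OF T'1(3) noti])
          obtain i' where i': "(i', j) \<in> T'" using T'1(7) j(1) by blast
          have "adjacent (i, j) (i', j)" using noti i' unfolding adjacent_def by auto
          then show "connected_pts T" unfolding T_def using conn_insert[OF T'1(4) i'] by blast
          have "(i, j) \<notin> T'" using noti by auto
          then have "card T = card T' + 1" unfolding T_def using fT' by simp
          then show "card T + 1 = card R + card C" using T'1(5) cR' cR by simp
          show "\<forall>i'\<in>R. \<exists>j'. (i', j') \<in> T" using T'1(6) unfolding T_def R'_def by auto
          show "\<forall>j'\<in>C. \<exists>i'. (i', j') \<in> T" using T'1(7) unfolding T_def by auto
        qed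
        then show ?thesis by blast
      next
        case rowsF: False
        show ?thesis
        proof (cases "\<exists>j\<in>C. \<forall>c\<in>S. \<forall>c'\<in>S. snd c = j \<longrightarrow> snd c' = j \<longrightarrow> c = c'")
          case True
          then obtain j where j: "j \<in> C" and uniq: "\<forall>c\<in>S. \<forall>c'\<in>S. snd c = j \<longrightarrow> snd c' = j \<longrightarrow> c = c'" by blast
          define C' where "C' = C - {j}"
          define S' where "S' = {c\<in>S. snd c \<noteq> j}"
          have cC': "card C' = card C - 1" unfolding C'_def using j fC by simp
          have lt: "card R + card C' < card R + card C" using cC' cC by simp
          have neC': "C' \<noteq> {}" using cC' C2 cC by (metis card.empty diff_is_0_eq le_antisym)
          have fC': "finite C'" unfolding C'_def using fC by simp
          have S'RC: "S' \<subseteq> R \<times> C'" unfolding S'_def C'_def using SRC by auto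
          have pS': "peel S'" using peel_subset[OF pS] unfolding S'_def by auto
          obtain T' where gT': "good R C' S' T'" using less.hyps[OF lt fR fC' neR neC' S'RC pS'] by blast
          have T'1: "S' \<subseteq> T'" "T' \<subseteq> R \<times> C'" "peel T'" "connected_pts T'" "card T' + 1 = card R + card C'"
            "\<forall>i\<in>R. \<exists>j. (i, j) \<in> T'" "\<forall>j\<in>C'. \<exists>i. (i, j) \<in> T'"
            using gT' unfolding good_def by auto
          obtain i where i: "i \<in> R" "\<forall>c\<in>S. snd c = j \<longrightarrow> c = (i, j)"
          proof (cases "\<exists>c\<in>S. snd c = j")
            case True
            then obtain c where c: "c \<in> S" "snd c = j" by blast
            have "fst c \<in> R" using c SRC by auto
            moreover have "\<forall>c'\<in>S. snd c' = j \<longrightarrow> c' = (fst c, j)" using uniq c by (metis prod.collapse)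
            ultimately show ?thesis using that by blast
          next
            case False
            obtain i where "i \<in> R" using neR by blast
            then show ?thesis using that False by blast
          qed
          define T where "T = insert (i, j) T'"
          have notj: "\<forall>c\<in>T'. snd c \<noteq> j" using T'1(2) unfolding C'_def by auto
          have fT': "finite T'" using T'1(2) fR fC' finite_subset by blast
          have "good R C S T" unfolding good_def
          proof (intro conjI)
            show "S \<subseteq> T"
            proof
              fix c assume "c \<in> S"
              then show "c \<in> T" using i(2) T'1(1) unfolding T_def S'_def by auto
            qed
            show "T \<subseteq> R \<times> C" using T'1(2) i(1) j unfolding T_def C'_def by auto
            show "peel T" unfolding T_def by (rule peel_insert_col[OF T'1(3) notj])
            obtain j' where j': "(i, j') \<in> T'" using T'1(6) i(1) by blast
            have "adjacent (i, j) (i, j')" using notj j' unfolding adjacent_def by auto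
            then show "connected_pts T" unfolding T_def using conn_insert[OF T'1(4) j'] by blast
            have "(i, j) \<notin> T'" using notj by auto
            then have "card T = card T' + 1" unfolding T_def using fT' by simp
            then show "card T + 1 = card R + card C" using T'1(5) cC' cC by simp
            show "\<forall>i'\<in>R. \<exists>j'. (i', j') \<in> T" using T'1(6) unfolding T_def by auto
            show "\<forall>j'\<in>C. \<exists>i'. (i', j') \<in> T" using T'1(7) unfolding T_def C'_def by auto
          qed
          then show ?thesis by blast
        next
          case colsF: False
          have rowm: "\<exists>c'\<in>S. c' \<noteq> c \<and> fst c' = fst c" if c: "c \<in> S" for c
          proof -
            have "fst c \<in> R" using c SRC by auto
            then obtain c1 c2 where "c1 \<in> S" "c2 \<in> S" "fst c1 = fst c" "fst c2 = fst c" "c1 \<noteq> c2"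
              using rowsF by blast
            then show ?thesis by metis
          qed
          have colm: "\<exists>c'\<in>S. c' \<noteq> c \<and> snd c' = snd c" if c: "c \<in> S" for c
          proof -
            have "snd c \<in> C" using c SRC by auto
            then obtain c1 c2 where "c1 \<in> S" "c2 \<in> S" "snd c1 = snd c" "snd c2 = snd c" "c1 \<noteq> c2"
              using colsF by blast
            then show ?thesis by metis
          qed
          have "mateful S" unfolding mateful_def using rowm colm by blast
          moreover have "S \<noteq> {}"
          proof -
            obtain i where "i \<in> R" using neR by blast
            then show ?thesis using rowsF by blast
          qed
          ultimately have "\<not> peel S" using not_peel[THEN iffD2] by blast
          then show ?thesis using pS by simp
        qed
      qed
    qed
  qed
qed

lemma conc_mid:
  fixes x y a :: real
  assumes "0 \<le> x" "0 \<le> y" "0 < a" "a < 1"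
  shows "(x powr a + y powr a) / 2 \<le> ((x + y) / 2) powr a"
    and "x \<noteq> y \<Longrightarrow> (x powr a + y powr a) / 2 < ((x + y) / 2) powr a"
proof -
  have lt: "(x powr a + y powr a) / 2 < ((x + y) / 2) powr a" if "x \<noteq> y"
  proof (cases "x < y")
    case True then show ?thesis using mid_powr[of x y a] assms by auto
  next
    case False
    then have "y < x" using that by auto
    then show ?thesis using mid_powr[of y x a] assms by (auto simp: add.commute)
  qed
  show "x \<noteq> y \<Longrightarrow> (x powr a + y powr a) / 2 < ((x + y) / 2) powr a" by (rule lt)
  show "(x powr a + y powr a) / 2 \<le> ((x + y) / 2) powr a"
    using lt by (cases "x = y") (auto intro: less_imp_le)
qed

lemma conv_mid:
  fixes x y a :: real
  assumes "0 \<le> x" "0 \<le> y" "1 < a"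
  shows "((x + y) / 2) powr a \<le> (x powr a + y powr a) / 2"
    and "x \<noteq> y \<Longrightarrow> ((x + y) / 2) powr a < (x powr a + y powr a) / 2"
proof -
  have lt: "((x + y) / 2) powr a < (x powr a + y powr a) / 2" if "x \<noteq> y"
  proof (cases "x < y")
    case True then show ?thesis using mid_powr[of x y a] assms by auto
  next
    case False
    then have "y < x" using that by auto
    then show ?thesis using mid_powr[of y x a] assms by (auto simp: add.commute)
  qed
  show "x \<noteq> y \<Longrightarrow> ((x + y) / 2) powr a < (x powr a + y powr a) / 2" by (rule lt)
  show "((x + y) / 2) powr a \<le> (x powr a + y powr a) / 2"
    using lt by (cases "x = y") (auto intro: less_imp_le)
qed

lemma dsum_strict:
  fixes f g :: "nat \<Rightarrow> nat \<Rightarrow> real"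
  assumes "\<forall>i<m. \<forall>j<n. f i j \<le> g i j" "ia < m" "ja < n" "f ia ja < g ia ja"
  shows "(\<Sum>i<m. \<Sum>j<n. f i j) < (\<Sum>i<m. \<Sum>j<n. g i j)"
proof -
  have le: "\<forall>i\<in>{..<m}. (\<Sum>j<n. f i j) \<le> (\<Sum>j<n. g i j)"
    using assms(1) by (auto intro: sum_mono)
  have "(\<Sum>j<n. f ia j) < (\<Sum>j<n. g ia j)"
    by (rule sum_strict_mono_ex1) (use assms in auto)
  then show ?thesis
    by (intro sum_strict_mono_ex1) (use le assms(2) in auto)
qed

definition SS :: "real \<Rightarrow> nat \<Rightarrow> nat \<Rightarrow> (nat \<Rightarrow> nat \<Rightarrow> real) \<Rightarrow> real" where
  "SS a m n P = (\<Sum>i<m. \<Sum>j<n. P i j powr a)"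

lemma poly_le1:
  assumes P: "P \<in> transport_polytope m n p q" and pp: "\<forall>i<m. p i > 0" and ps: "(\<Sum>i<m. p i) = 1"
    and ij: "i < m" "j < n"
  shows "P i j \<le> 1"
proof -
  have "P i j \<le> (\<Sum>j<n. P i j)"
    by (rule member_le_sum) (use ij poly_facts(2)[OF P] in auto)
  also have "\<dots> = p i" using poly_facts(3)[OF P ij(1)] .
  also have "\<dots> \<le> (\<Sum>i<m. p i)"
    by (rule member_le_sum) (use ij pp in \<open>auto intro: less_imp_le\<close>)
  finally show ?thesis using ps by simp
qed

lemma poly_sum1:
  assumes P: "P \<in> transport_polytope m n p q" and ps: "(\<Sum>i<m. p i) = 1"
  shows "(\<Sum>i<m. \<Sum>j<n. P i j) = 1"
  using poly_facts(3)[OF P] ps by simp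

lemma SS_pos:
  assumes P: "P \<in> transport_polytope m n p q" and ps: "(\<Sum>i<m. p i) = 1"
  shows "SS a m n P > 0"
proof -
  obtain i0 j0 where ij: "i0 < m" "j0 < n" "P i0 j0 \<noteq> 0"
  proof (rule ccontr)
    assume "\<not> thesis"
    then have "\<forall>i<m. \<forall>j<n. P i j = 0" using that by blast
    then have "(\<Sum>i<m. \<Sum>j<n. P i j) = 0" by simp
    then show False using poly_sum1[OF P ps] by simp
  qed
  have inner: "0 < (\<Sum>j<n. P i0 j powr a)"
    by (rule sum_pos2[where i=j0]) (use ij in auto)
  show ?thesis unfolding SS_def
    by (rule sum_pos2[where i=i0]) (use ij inner in \<open>auto intro: sum_nonneg\<close>)
qed

lemma SS_ge1:
  assumes P: "P \<in> transport_polytope m n p q" and pp: "\<forall>i<m. p i > 0" and ps: "(\<Sum>i<m. p i) = 1"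
    and a: "0 \<le> a" "a < 1"
  shows "SS a m n P \<ge> 1"
proof -
  have "\<forall>i<m. \<forall>j<n. P i j \<le> P i j powr a"
  proof (intro allI impI)
    fix i j assume ij: "i < m" "j < n"
    have "0 \<le> P i j" "P i j \<le> 1" using poly_facts(2)[OF P ij] poly_le1[OF P pp ps ij] by auto
    then have "P i j powr 1 \<le> P i j powr a" using powr_mono'[of a 1 "P i j"] a by simp
    then show "P i j \<le> P i j powr a" using powr_one[OF \<open>0 \<le> P i j\<close>] by simp
  qed
  then have "(\<Sum>i<m. \<Sum>j<n. P i j) \<le> SS a m n P" unfolding SS_def by (auto intro!: sum_mono)
  then show ?thesis using poly_sum1[OF P ps] by simp
qed

lemma SS_le1:
  assumes P: "P \<in> transport_polytope m n p q" and pp: "\<forall>i<m. p i > 0" and ps: "(\<Sum>i<m. p i) = 1"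
    and a: "1 < a"
  shows "SS a m n P \<le> 1"
proof -
  have "\<forall>i<m. \<forall>j<n. P i j powr a \<le> P i j"
  proof (intro allI impI)
    fix i j assume ij: "i < m" "j < n"
    have "0 \<le> P i j" "P i j \<le> 1" using poly_facts(2)[OF P ij] poly_le1[OF P pp ps ij] by auto
    then have "P i j powr a \<le> P i j powr 1" using powr_mono'[of 1 a "P i j"] a by simp
    then show "P i j powr a \<le> P i j" using powr_one[OF \<open>0 \<le> P i j\<close>] by simp
  qed
  then have "SS a m n P \<le> (\<Sum>i<m. \<Sum>j<n. P i j)" unfolding SS_def by (auto intro!: sum_mono)
  then show ?thesis using poly_sum1[OF P ps] by simp
qed

lemma H_form:
  assumes "H = renyi_entropy a m n \<or> H = tsallis_entropy a m n"
  shows "(\<forall>P. H P = 1 / (1 - a) * ln (SS a m n P)) \<or> (\<forall>P. H P = 1 / (1 - a) * (SS a m n P - 1))"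
  using assms unfolding renyi_entropy_def tsallis_entropy_def SS_def by auto

lemma H_nonneg:
  assumes Hf: "H = renyi_entropy a m n \<or> H = tsallis_entropy a m n" and a: "0 \<le> a" "a \<noteq> 1"
    and P: "P \<in> transport_polytope m n p q" and pp: "\<forall>i<m. p i > 0" and ps: "(\<Sum>i<m. p i) = 1"
  shows "H P \<ge> 0"
proof (cases "a < 1")
  case True
  have s: "SS a m n P \<ge> 1" using SS_ge1[OF P pp ps a(1) True] .
  have c: "1 / (1 - a) > 0" using True by simp
  show ?thesis using H_form[OF Hf]
  proof
    assume "\<forall>P. H P = 1 / (1 - a) * ln (SS a m n P)"
    moreover have "ln (SS a m n P) \<ge> 0" using s by simp
    ultimately show ?thesis using c by simp
  next
    assume "\<forall>P. H P = 1 / (1 - a) * (SS a m n P - 1)"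
    then show ?thesis using c s by simp
  qed
next
  case False
  then have a1: "1 < a" using a by simp
  have s: "SS a m n P \<le> 1" using SS_le1[OF P pp ps a1] .
  have s0: "SS a m n P > 0" using SS_pos[OF P ps] .
  have c: "1 / (1 - a) < 0" using a1 by simp
  show ?thesis using H_form[OF Hf]
  proof
    assume "\<forall>P. H P = 1 / (1 - a) * ln (SS a m n P)"
    moreover have "ln (SS a m n P) \<le> 0" using s s0 by simp
    moreover have "1 - a < 0" using a1 by simp
    ultimately show ?thesis by (simp add: divide_nonpos_neg)
  next
    assume "\<forall>P. H P = 1 / (1 - a) * (SS a m n P - 1)"
    moreover have "1 - a < 0" using a1 by simp
    ultimately show ?thesis using s by (simp add: divide_nonpos_neg)
  qed
qed

lemma H_mono:
  assumes Hf: "H = renyi_entropy a m n \<or> H = tsallis_entropy a m n" and a: "0 \<le> a" "a \<noteq> 1"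
    and P: "P \<in> transport_polytope m n p q" and Q: "Q \<in> transport_polytope m n p q"
    and ps: "(\<Sum>i<m. p i) = 1" and le: "H P \<le> H Q"
  shows "(a < 1 \<longrightarrow> SS a m n P \<le> SS a m n Q) \<and> (1 < a \<longrightarrow> SS a m n Q \<le> SS a m n P)"
proof -
  have sP: "SS a m n P > 0" using SS_pos[OF P ps] .
  have sQ: "SS a m n Q > 0" using SS_pos[OF Q ps] .
  show ?thesis using H_form[OF Hf]
  proof
    assume h: "\<forall>P. H P = 1 / (1 - a) * ln (SS a m n P)"
    then have l: "1 / (1 - a) * ln (SS a m n P) \<le> 1 / (1 - a) * ln (SS a m n Q)" using le by simp
    show ?thesis
    proof (intro conjI impI)
      assume "a < 1"
      then have "1 / (1 - a) > 0" by simp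
      then have "ln (SS a m n P) \<le> ln (SS a m n Q)" using l mult_le_cancel_left_pos by blast
      then show "SS a m n P \<le> SS a m n Q" using sP sQ by simp
    next
      assume "1 < a"
      then have "1 / (1 - a) < 0" by simp
      then have "ln (SS a m n Q) \<le> ln (SS a m n P)" using l mult_le_cancel_left_neg by blast
      then show "SS a m n Q \<le> SS a m n P" using sP sQ by simp
    qed
  next
    assume h: "\<forall>P. H P = 1 / (1 - a) * (SS a m n P - 1)"
    then have l: "1 / (1 - a) * (SS a m n P - 1) \<le> 1 / (1 - a) * (SS a m n Q - 1)" using le by simp
    show ?thesis
    proof (intro conjI impI)
      assume "a < 1"
      then have "1 / (1 - a) > 0" by simp
      then have "SS a m n P - 1 \<le> SS a m n Q - 1" using l mult_le_cancel_left_pos by blast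
      then show "SS a m n P \<le> SS a m n Q" by simp
    next
      assume "1 < a"
      then have "1 / (1 - a) < 0" by simp
      then have "SS a m n Q - 1 \<le> SS a m n P - 1" using l mult_le_cancel_left_neg by blast
      then show "SS a m n Q \<le> SS a m n P" by simp
    qed
  qed
qed

lemma minimizer_extreme:
  assumes a: "0 \<le> a" "a \<noteq> 1" and Pt: "Pt \<in> transport_polytope m n p q"
    and SSmin: "\<And>P. P \<in> transport_polytope m n p q \<Longrightarrow> (a < 1 \<longrightarrow> SS a m n Pt \<le> SS a m n P) \<and> (1 < a \<longrightarrow> SS a m n P \<le> SS a m n Pt)"
  shows "Pt \<in> extreme_points_of (transport_polytope m n p q)"
proof (rule ccontr)
  assume ne: "Pt \<notin> extreme_points_of (transport_polytope m n p q)"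
  then have np: "\<not> peel (support m n Pt)" using peel_extreme[OF Pt] by blast
  obtain d :: "nat \<Rightarrow> nat \<Rightarrow> real" where out: "\<forall>i j. (m \<le> i \<or> n \<le> j) \<longrightarrow> d i j = 0" and rows: "\<forall>i<m. (\<Sum>j<n. d i j) = 0"
    and cols: "\<forall>j<n. (\<Sum>i<m. d i j) = 0"
    and nz: "\<forall>i j. d i j \<noteq> 0 \<longrightarrow> i < m \<and> j < n \<and> Pt i j > 0 \<and> (d i j = 1 \<or> d i j = -1)"
    and one: "\<exists>i j. d i j = 1"
    using nonpeel_d[OF Pt np] by blast
  obtain i1 j1 where d1: "d i1 j1 = 1" using one by blast
  have ij1: "i1 < m" "j1 < n" "Pt i1 j1 > 0" using nz[rule_format, of i1 j1] d1 by auto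
  show False
  proof (cases "a = 0")
    case True
    define S1 where "S1 = {c \<in> {..<m} \<times> {..<n}. d (fst c) (snd c) = 1}"
    have fS1: "finite S1" unfolding S1_def by simp
    have neS1: "(i1, j1) \<in> S1" unfolding S1_def using ij1 d1 by simp
    define e where "e = Min ((\<lambda>c. Pt (fst c) (snd c)) ` S1)"
    have "e \<in> (\<lambda>c. Pt (fst c) (snd c)) ` S1" unfolding e_def using fS1 neS1 by (intro Min_in) auto
    then obtain c0 where c0: "c0 \<in> S1" "e = Pt (fst c0) (snd c0)" by blast
    have emin: "e \<le> Pt i j" if "i < m" "j < n" "d i j = 1" for i j
    proof -
      have "(i, j) \<in> S1" unfolding S1_def using that by simp
      then show ?thesis unfolding e_def using fS1 by (metis (no_types, lifting) Min_le finite_imageI fst_conv image_eqI snd_conv)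
    qed
    obtain i0 j0 where c0': "c0 = (i0, j0)" "i0 < m" "j0 < n" "d i0 j0 = 1" using c0(1) unfolding S1_def by auto
    have epos: "e > 0" using c0(2) c0' nz by auto
    define Q where "Q = (\<lambda>i j. Pt i j + (- e) * d i j)"
    have nnQ: "\<forall>i<m. \<forall>j<n. 0 \<le> Pt i j + (- e) * d i j"
    proof (intro allI impI)
      fix i j assume ij: "i < m" "j < n"
      show "0 \<le> Pt i j + (- e) * d i j"
      proof (cases "d i j = 0")
        case True then show ?thesis using poly_facts(2)[OF Pt ij] by simp
      next
        case False
        then have "d i j = 1 \<or> d i j = -1" "Pt i j > 0" using nz by auto
        then show ?thesis using emin[OF ij] epos by auto
      qed
    qed
    have Qp: "Q \<in> transport_polytope m n p q" unfolding Q_def by (rule perturb[OF Pt out rows cols nnQ])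
    have "SS a m n Q < SS a m n Pt" unfolding SS_def True
    proof (rule dsum_strict[where ia=i0 and ja=j0])
      show "\<forall>i<m. \<forall>j<n. Q i j powr 0 \<le> Pt i j powr 0"
      proof (intro allI impI)
        fix i j assume ij: "i < m" "j < n"
        show "Q i j powr 0 \<le> Pt i j powr 0"
        proof (cases "d i j = 0")
          case True then show ?thesis unfolding Q_def by simp
        next
          case False
          then have "Pt i j > 0" using nz by auto
          then show ?thesis by simp
        qed
      qed
      show "i0 < m" "j0 < n" using c0' by auto
      have "Q i0 j0 = 0" unfolding Q_def using c0' c0(2) by simp
      then show "Q i0 j0 powr 0 < Pt i0 j0 powr 0" using epos c0' c0(2) by simp
    qed
    moreover have "SS a m n Pt \<le> SS a m n Q" using SSmin[OF Qp] True by simp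
    ultimately show False by simp
  next
    case False
    then have apos: "a > 0" using a by simp
    define S where "S = {c \<in> {..<m} \<times> {..<n}. d (fst c) (snd c) \<noteq> 0}"
    have "finite S" unfolding S_def by simp
    moreover have "\<forall>c\<in>S. Pt (fst c) (snd c) > 0" unfolding S_def using nz by auto
    ultimately obtain e where e: "e > 0" "\<forall>c\<in>S. e \<le> Pt (fst c) (snd c)"
      using min_pos[of S "\<lambda>c. Pt (fst c) (snd c)"] by blast
    have bnd: "e \<le> Pt i j" if "i < m" "j < n" "d i j \<noteq> 0" for i j
    proof -
      have "(i, j) \<in> S" unfolding S_def using that by simp
      then show ?thesis using e(2) by fastforce
    qed
    have nn: "\<forall>i<m. \<forall>j<n. 0 \<le> Pt i j + s * d i j" if s: "\<bar>s\<bar> \<le> e" for s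
    proof (intro allI impI)
      fix i j assume ij: "i < m" "j < n"
      show "0 \<le> Pt i j + s * d i j"
      proof (cases "d i j = 0")
        case True then show ?thesis using poly_facts(2)[OF Pt ij] by simp
      next
        case False
        then have "e \<le> Pt i j" "d i j = 1 \<or> d i j = -1" using bnd ij nz by auto
        then show ?thesis using s by (auto simp: abs_if split: if_splits)
      qed
    qed
    define A where "A = (\<lambda>i j. Pt i j + e * d i j)"
    define B where "B = (\<lambda>i j. Pt i j + (- e) * d i j)"
    have A: "A \<in> transport_polytope m n p q" unfolding A_def
      by (rule perturb[OF Pt out rows cols nn]) (use e in simp)
    have B: "B \<in> transport_polytope m n p q" unfolding B_def
      by (rule perturb[OF Pt out rows cols nn]) (use e in simp)
    have mid: "Pt i j = (A i j + B i j) / 2" for i j unfolding A_def B_def by simp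
    have AB1: "A i1 j1 \<noteq> B i1 j1" unfolding A_def B_def using e d1 by simp
    have nnA: "\<And>i j. i < m \<Longrightarrow> j < n \<Longrightarrow> 0 \<le> A i j" using poly_facts(2)[OF A] .
    have nnB: "\<And>i j. i < m \<Longrightarrow> j < n \<Longrightarrow> 0 \<le> B i j" using poly_facts(2)[OF B] .
    have avg: "(\<Sum>i<m. \<Sum>j<n. (A i j powr a + B i j powr a) / 2) = (SS a m n A + SS a m n B) / 2"
    proof -
      have "(\<Sum>i<m. \<Sum>j<n. (A i j powr a + B i j powr a) / 2) = (\<Sum>i<m. \<Sum>j<n. A i j powr a + B i j powr a) / 2"
        by (simp only: sum_divide_distrib)
      also have "\<dots> = (SS a m n A + SS a m n B) / 2" unfolding SS_def by (simp only: sum.distrib)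
      finally show ?thesis .
    qed
    show False
    proof (cases "a < 1")
      case True
      have "(\<Sum>i<m. \<Sum>j<n. (A i j powr a + B i j powr a) / 2) < (\<Sum>i<m. \<Sum>j<n. Pt i j powr a)"
      proof (rule dsum_strict[where ia=i1 and ja=j1])
        show "\<forall>i<m. \<forall>j<n. (A i j powr a + B i j powr a) / 2 \<le> Pt i j powr a"
          unfolding mid using conc_mid(1)[OF nnA nnB apos True] by blast
        show "i1 < m" "j1 < n" using ij1 by auto
        show "(A i1 j1 powr a + B i1 j1 powr a) / 2 < Pt i1 j1 powr a"
          unfolding mid using conc_mid(2)[OF nnA[OF ij1(1,2)] nnB[OF ij1(1,2)] apos True AB1] .
      qed
      then have "(SS a m n A + SS a m n B) / 2 < SS a m n Pt" unfolding avg SS_def .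
      moreover have "SS a m n Pt \<le> SS a m n A" "SS a m n Pt \<le> SS a m n B"
        using SSmin[OF A] SSmin[OF B] True by auto
      ultimately show False by simp
    next
      case False
      then have a1: "1 < a" using a by simp
      have "(\<Sum>i<m. \<Sum>j<n. Pt i j powr a) < (\<Sum>i<m. \<Sum>j<n. (A i j powr a + B i j powr a) / 2)"
      proof (rule dsum_strict[where ia=i1 and ja=j1])
        show "\<forall>i<m. \<forall>j<n. Pt i j powr a \<le> (A i j powr a + B i j powr a) / 2"
          unfolding mid using conv_mid(1)[OF nnA nnB a1] by blast
        show "i1 < m" "j1 < n" using ij1 by auto
        show "Pt i1 j1 powr a < (A i1 j1 powr a + B i1 j1 powr a) / 2"
          unfolding mid using conv_mid(2)[OF nnA[OF ij1(1,2)] nnB[OF ij1(1,2)] a1 AB1] .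
      qed
      then have "SS a m n Pt < (SS a m n A + SS a m n B) / 2" unfolding avg SS_def .
      moreover have "SS a m n A \<le> SS a m n Pt" "SS a m n B \<le> SS a m n Pt"
        using SSmin[OF A] SSmin[OF B] a1 by auto
      ultimately show False by simp
    qed
  qed
qed

lemma tree_sub_ext:
  assumes "P \<in> tree_polytope m n p q"
  shows "P \<in> extreme_points_of (transport_polytope m n p q)"
proof -
  obtain T where P: "P \<in> transport_polytope m n p q" and T: "T \<subseteq> {0..<m} \<times> {0..<n}" "is_tree T"
    "support m n P \<subseteq> T"
    using assms unfolding tree_polytope_def by blast
  have fT: "finite T" using T(1) finite_subset by blast
  have "\<not> (\<exists>vs. set vs \<subseteq> T \<and> is_circuit vs)" using T(2) unfolding is_tree_def by blast
  then have "peel T" using no_circuit_peel[OF fT] by blast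
  then have "peel (support m n P)" using peel_subset T(3) by blast
  then show ?thesis using peel_extreme[OF P] by blast
qed

lemma ext_sub_tree:
  assumes "P \<in> extreme_points_of (transport_polytope m n p q)" "m \<ge> 1" "n \<ge> 1"
  shows "P \<in> tree_polytope m n p q"
proof -
  have P: "P \<in> transport_polytope m n p q" using assms(1) unfolding extreme_points_of_def by blast
  have pS: "peel (support m n P)" using extreme_peel[OF assms(1)] .
  have "0 \<in> {..<m}" "0 \<in> {..<n}" using assms(2,3) by auto
  then have ne: "{..<m} \<noteq> {}" "{..<n} \<noteq> {}" by blast+
  obtain T where g: "good {..<m} {..<n} (support m n P) T"
    using extend[of "{..<m}" "{..<n}" "support m n P"] ne pS support_box by blast
  have T: "support m n P \<subseteq> T" "T \<subseteq> {..<m} \<times> {..<n}" "peel T" "connected_pts T" "card T + 1 = m + n"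
    using g unfolding good_def by auto
  have "is_tree T" unfolding is_tree_def using T(3,4) peel_no_circuit by blast
  moreover have "card T = m + n - 1" using T(5) by simp
  moreover have "T \<subseteq> {0..<m} \<times> {0..<n}" using T(2) by (simp add: atLeast0LessThan)
  ultimately show ?thesis unfolding tree_polytope_def using P T(1) by blast
qed

theorem corollary1p1:
  fixes m n :: nat and p q :: "nat \<Rightarrow> real" and \<alpha> :: real
    and H :: "(nat \<Rightarrow> nat \<Rightarrow> real) \<Rightarrow> real" and Pt :: "nat \<Rightarrow> nat \<Rightarrow> real"
  assumes "m \<ge> 2" and "n \<ge> 2"
    and "\<forall>i<m. p i > 0" and "(\<Sum>i<m. p i) = 1"
    and "\<forall>j<n. q j > 0" and "(\<Sum>j<n. q j) = 1"
    and "\<alpha> \<ge> 0" and "\<alpha> \<noteq> 1"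
    and "H = renyi_entropy \<alpha> m n \<or> H = tsallis_entropy \<alpha> m n"
    and "Pt \<in> transport_polytope m n p q"
    and "H Pt = (INF P \<in> transport_polytope m n p q. H P)"
  shows "Pt \<in> tree_polytope m n p q
    \<and> tree_polytope m n p q = extreme_points_of (transport_polytope m n p q)
    \<and> (\<forall>P \<in> tree_polytope m n p q. H Pt \<le> H P)"
proof -
  have bdd: "bdd_below (H ` transport_polytope m n p q)"
    by (rule bdd_belowI[of _ 0]) (use H_nonneg[OF assms(9) assms(7) assms(8) _ assms(3) assms(4)] in auto)
  have le: "\<forall>P\<in>transport_polytope m n p q. H Pt \<le> H P"
    using cINF_lower[OF bdd] assms(11) by simp
  have SSmin: "\<And>P. P \<in> transport_polytope m n p q \<Longrightarrow> (\<alpha> < 1 \<longrightarrow> SS \<alpha> m n Pt \<le> SS \<alpha> m n P) \<and> (1 < \<alpha> \<longrightarrow> SS \<alpha> m n P \<le> SS \<alpha> m n Pt)"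
    using H_mono[OF assms(9) assms(7) assms(8) assms(10) _ assms(4)] le by blast
  have ext: "Pt \<in> extreme_points_of (transport_polytope m n p q)"
    by (rule minimizer_extreme[OF assms(7) assms(8) assms(10) SSmin])
  have eq: "tree_polytope m n p q = extreme_points_of (transport_polytope m n p q)"
    using tree_sub_ext ext_sub_tree assms(1,2) by (metis Suc_1 Suc_leD subsetI subset_antisym)
  have "\<forall>P \<in> tree_polytope m n p q. H Pt \<le> H P"
    using le unfolding tree_polytope_def by blast
  then show ?thesis using eq ext by blast
qed

end
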